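(* Assume $0\le\alpha<\beta$ and $\alpha+\beta<2$. Let $\tilde w_1:=\frac{1}{\sqrt N}\sum_{i=1}^N\sigma_i$ and $\tilde w_2:=\frac{1}{\sqrt N}\big(\sum_{i\in S}\sigma_i-\sum_{i\notin S}\sigma_i\big)$. Then, as $N\to\infty$, under $\mu_{N,\alpha,\beta,S}$ the vector $(\tilde w_1,\tilde w_2)$ converges in distribution to a centered two-dimensional Gaussian with covariance matrix \[ \Sigma=\begin{pmatrix}\dfrac{1}{1-\frac{\alpha+\beta}{2}}&0\\[2mm]0&\dfrac{1}{1-\frac{\beta-\alpha}{2}}\end{pmatrix}. \]
   Context: Block spin Ising model: $N$ is even, $S\subset\{1,\dots,N\}$ with $|S|=N/2$. Write $i\sim j$ if $i,j$ both lie in $S$ or both in $S^c$, $i\not\sim j$ otherwise. Hamiltonian $H_{N,\alpha,\beta,S}(\sigma)=-\frac{\beta}{2N}\sum_{i\sim j}\sigma_i\sigma_j-\frac{\alpha}{2N}\sum_{i\not\sim j}\sigma_i\sigma_j$ on $\{-1,+1\}^N$ (ordered pairs, including $i=j$), Gibbs measure $\mu_{N,\alpha,\beta,S}(\sigma)\propto e^{-H_{N,\alpha,\beta,S}(\sigma)}$. The set $S$ may depend on $N$. *)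

theory Defs
  imports "HOL-Probability.Probability"
begin

text \<open>Spin configurations on sites 1..N: sigma i in {-1,+1} for i in {1..N}, and 0 (dummy) elsewhere.\<close>
definition configs :: "nat \<Rightarrow> (nat \<Rightarrow> real) set" where
  "configs N = ({1..N} \<rightarrow>\<^sub>E {-1, 1})"

definition same_block :: "nat set \<Rightarrow> nat \<Rightarrow> nat \<Rightarrow> bool" where
  "same_block S i j \<longleftrightarrow> (i \<in> S \<longleftrightarrow> j \<in> S)"

text \<open>Hamiltonian of the block spin Ising model (sum over ordered pairs, including i = j).\<close>
definition hamiltonian :: "nat \<Rightarrow> real \<Rightarrow> real \<Rightarrow> nat set \<Rightarrow> (nat \<Rightarrow> real) \<Rightarrow> real" where
  "hamiltonian N \<alpha> \<beta> S \<sigma> =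
     - (\<beta> / (2 * real N)) * (\<Sum>i\<in>{1..N}. \<Sum>j\<in>{1..N}. if same_block S i j then \<sigma> i * \<sigma> j else 0)
     - (\<alpha> / (2 * real N)) * (\<Sum>i\<in>{1..N}. \<Sum>j\<in>{1..N}. if same_block S i j then 0 else \<sigma> i * \<sigma> j)"

definition gibbs_measure :: "nat \<Rightarrow> real \<Rightarrow> real \<Rightarrow> nat set \<Rightarrow> (nat \<Rightarrow> real) measure" where
  "gibbs_measure N \<alpha> \<beta> S =
     point_measure (configs N)
       (\<lambda>\<sigma>. ennreal (exp (- hamiltonian N \<alpha> \<beta> S \<sigma>) /
                       (\<Sum>\<tau>\<in>configs N. exp (- hamiltonian N \<alpha> \<beta> S \<tau>))))"

definition w1 :: "nat \<Rightarrow> (nat \<Rightarrow> real) \<Rightarrow> real" where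
  "w1 N \<sigma> = (\<Sum>i\<in>{1..N}. \<sigma> i) / sqrt (real N)"

definition w2 :: "nat \<Rightarrow> nat set \<Rightarrow> (nat \<Rightarrow> real) \<Rightarrow> real" where
  "w2 N S \<sigma> = ((\<Sum>i\<in>S. \<sigma> i) - (\<Sum>i\<in>{1..N} - S. \<sigma> i)) / sqrt (real N)"

text \<open>Centered 2-dimensional Gaussian with covariance matrix ((c11, c12), (c12, c22)),
  given by its Lebesgue density (c assumed positive definite).\<close>
definition gaussian2 :: "real \<Rightarrow> real \<Rightarrow> real \<Rightarrow> (real \<times> real) measure" where
  "gaussian2 c11 c12 c22 =
     density lborel (\<lambda>(x, y). ennreal
       (1 / (2 * pi * sqrt (c11 * c22 - c12\<^sup>2)) *
        exp (- (c22 * x\<^sup>2 - 2 * c12 * x * y + c11 * y\<^sup>2) / (2 * (c11 * c22 - c12\<^sup>2)))))"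

definition conv_distr2 ::
  "(nat \<Rightarrow> 'a measure) \<Rightarrow> (nat \<Rightarrow> 'a \<Rightarrow> real \<times> real) \<Rightarrow> (real \<times> real) measure \<Rightarrow> bool" where
  "conv_distr2 M X \<nu> \<longleftrightarrow>
     (\<forall>f :: real \<times> real \<Rightarrow> real. continuous_on UNIV f \<and> bounded (range f) \<longrightarrow>
        (\<lambda>n. integral\<^sup>L (M n) (\<lambda>\<omega>. f (X n \<omega>))) \<longlonglongrightarrow> integral\<^sup>L \<nu> f)"

end

theory Submission
  imports Defs "HOL-Real_Asymp.Real_Asymp"
begin

lemma exp_2y_bound:
  fixes y :: real assumes "0 \<le> y"
  shows "exp (2*y) * (1-y) \<le> 1 + y"
proof -
  let ?g = "\<lambda>t::real. (1+t) - exp (2*t) * (1-t)"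
  have "?g 0 \<le> ?g y"
  proof (rule DERIV_nonneg_imp_nondecreasing[OF assms])
    fix t :: real assume t: "0 \<le> t" "t \<le> y"
    have d: "(?g has_real_derivative (1 - exp (2*t) * (1 - 2*t))) (at t)"
      by (auto intro!: derivative_eq_intros simp: algebra_simps)
    have "1 - 2*t \<le> exp (-(2*t))" using exp_ge_add_one_self[of "-(2*t)"] by simp
    then have "exp (2*t) * (1 - 2*t) \<le> exp (2*t) * exp (-(2*t))"
      by (intro mult_left_mono) auto
    also have "\<dots> = 1" by (simp add: exp_minus field_simps)
    finally show "\<exists>d. (?g has_real_derivative d) (at t) \<and> 0 \<le> d" using d by auto
  qed
  then show ?thesis by simp
qed

lemma factor_upper:
  fixes y :: real assumes "0 \<le> y" "y < 1"
  shows "(1-y)/(1+y) \<le> exp (-2*y)"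
proof -
  have "exp (2*y) * (1-y) \<le> 1 + y" by (rule exp_2y_bound[OF assms(1)])
  then have "(1-y) \<le> (1+y) * exp (-2*y)"
    by (simp add: exp_minus field_simps)
  then show ?thesis using assms by (simp add: divide_le_eq mult.commute)
qed

lemma factor_lower:
  fixes y :: real assumes "0 \<le> y" "y \<le> 1/2"
  shows "exp (-2*y - 4*y^2) \<le> (1-y)/(1+y)"
proof -
  have "1 + 2*y/(1-y) \<le> exp (2*y/(1-y))" by (rule exp_ge_add_one_self)
  also have "2*y/(1-y) \<le> 2*y + 4*y^2"
  proof -
    have e: "(2*y + 4*y^2)*(1-y) = 2*y + 2*y^2*(1-2*y)" by (simp add: algebra_simps power2_eq_square)
    have "0 \<le> 2*y^2*(1-2*y)" using assms by simp
    then have "2*y \<le> (2*y + 4*y^2)*(1-y)" using e by linarith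
    then show ?thesis using assms by (simp add: divide_le_eq)
  qed
  then have "exp (2*y/(1-y)) \<le> exp (2*y + 4*y^2)" by simp
  finally have a: "(1+y)/(1-y) \<le> exp (2*y + 4*y^2)" using assms by (simp add: field_simps)
  have "exp (-2*y - 4*y^2) = inverse (exp (2*y + 4*y^2))" by (simp add: exp_minus[symmetric])
  also have "\<dots> \<le> inverse ((1+y)/(1-y))" using a assms by (intro le_imp_inverse_le) auto
  also have "\<dots> = (1-y)/(1+y)" by simp
  finally show ?thesis .
qed

lemma binom_step_real:
  assumes "k < n"
  shows "real (n choose Suc k) = real (n choose k) * (real (n - k) / real (Suc k))"
proof -
  have "Suc k * (n choose Suc k) = (n - k) * (n choose k)"
  proof -
    obtain m where m: "n = Suc m" using assms by (cases n) auto
    have "Suc k * (Suc m choose Suc k) = Suc m * (m choose k)" by (rule Suc_times_binomial)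
    also have "\<dots> = (Suc m - k) * (Suc m choose k)"
      using binomial_absorb_comp[of "Suc m" k] by simp
    finally show ?thesis using m by simp
  qed
  then have "real (Suc k) * real (n choose Suc k) = real (n - k) * real (n choose k)"
    by (metis of_nat_mult)
  then show ?thesis by (simp add: field_simps)
qed

lemma binom_prod:
  assumes "c \<le> k" "k \<le> n"
  shows "real (n choose k) = real (n choose c) * (\<Prod>i\<in>{c<..k}. real (n + 1 - i) / real i)"
  using assms
proof (induction k rule: dec_induct)
  case base then show ?case by simp
next
  case (step k)
  have e: "{c<..Suc k} = insert (Suc k) {c<..k}" using step by auto
  have "real (n choose Suc k) = real (n choose k) * (real (n - k) / real (Suc k))"
    using step by (intro binom_step_real) auto
  also have "\<dots> = real (n choose c) * (\<Prod>i\<in>{c<..Suc k}. real (n + 1 - i) / real i)"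
    using step by (simp add: e)
  finally show ?case .
qed

lemma sum_lin:
  assumes "c \<le> k"
  shows "(\<Sum>i\<in>{c<..k}. (2 * real i - real n - 1)) = (real k - real c) * (real k + real c - real n)"
  using assms
proof (induction k rule: dec_induct)
  case base then show ?case by simp
next
  case (step k)
  have e: "{c<..Suc k} = insert (Suc k) {c<..k}" using step by auto
  show ?case using step by (simp add: e algebra_simps)
qed


definition rb :: "nat \<Rightarrow> nat \<Rightarrow> real" where
  "rb n k = real (n choose k) / real (n choose (n div 2))"

lemma central_pos: "0 < real (n choose (n div 2))"
  by simp

lemma frac_cancel2:
  fixes X B I :: real assumes "B \<noteq> 0"
  shows "(2*X/B)/(2*I/B) = X/I"
  using assms by (cases "I = 0") (simp_all add: field_simps)

lemma rb_prod:
  assumes "n div 2 \<le> k" "k \<le> n"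
  shows "rb n k = (\<Prod>i\<in>{n div 2<..k}. (1 - (2*real i - real n - 1)/(real n + 1)) / (1 + (2*real i - real n - 1)/(real n + 1)))"
proof -
  have "rb n k = (\<Prod>i\<in>{n div 2<..k}. real (n + 1 - i) / real i)"
    using binom_prod[OF assms] central_pos[of n] unfolding rb_def by simp
  also have "\<dots> = (\<Prod>i\<in>{n div 2<..k}. (1 - (2*real i - real n - 1)/(real n + 1)) / (1 + (2*real i - real n - 1)/(real n + 1)))"
  proof (rule prod.cong[OF refl])
    fix i assume i: "i \<in> {n div 2<..k}"
    then have "i \<le> n" "0 < i" using assms by auto
    then have a: "real (n + 1 - i) = real n + 1 - real i" by (simp add: of_nat_diff)
    have b: "1 - (2*real i - real n - 1)/(real n + 1) = 2*(real n + 1 - real i)/(real n + 1)"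
      by (simp add: field_simps)
    have c: "1 + (2*real i - real n - 1)/(real n + 1) = 2*real i/(real n + 1)"
      by (simp add: field_simps)
    show "real (n + 1 - i) / real i = (1 - (2*real i - real n - 1)/(real n + 1)) / (1 + (2*real i - real n - 1)/(real n + 1))"
    proof -
      have np: "real n + 1 \<noteq> 0" "real i \<noteq> 0" using \<open>0 < i\<close> by linarith+
      show ?thesis unfolding b c a frac_cancel2[OF np(1)] by (rule refl)
    qed
  qed
  finally show ?thesis .
qed

lemma rb_bounds_ge:
  assumes "n div 2 \<le> k" "k \<le> n"
  defines "y \<equiv> \<lambda>i. (2*real i - real n - 1)/(real n + 1)"
  shows "rb n k \<le> exp (- 2 * (real k - real (n div 2)) * (real k + real (n div 2) - real n) / (real n + 1))"
    and "(\<forall>i\<in>{n div 2<..k}. y i \<le> 1/2) \<Longrightarrow>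
         exp (- 2 * (real k - real (n div 2)) * (real k + real (n div 2) - real n) / (real n + 1)
              - 4 * (\<Sum>i\<in>{n div 2<..k}. (y i)^2)) \<le> rb n k"
proof -
  let ?c = "n div 2"
  have y_ge: "0 \<le> y i" if "i \<in> {?c<..k}" for i
    using that unfolding y_def by (auto simp: field_simps)
  have y_lt: "y i < 1" if "i \<in> {?c<..k}" for i
    using that assms(2) unfolding y_def by (auto simp: field_simps)
  have rbp: "rb n k = (\<Prod>i\<in>{?c<..k}. (1 - y i)/(1 + y i))"
    using rb_prod[OF assms(1,2)] unfolding y_def by simp
  have sy: "(\<Sum>i\<in>{?c<..k}. y i) = (real k - real ?c) * (real k + real ?c - real n) / (real n + 1)"
    unfolding y_def using sum_lin[OF assms(1), of n]
    by (simp add: sum_divide_distrib[symmetric])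
  show "rb n k \<le> exp (- 2 * (real k - real ?c) * (real k + real ?c - real n) / (real n + 1))"
  proof -
    have "rb n k \<le> (\<Prod>i\<in>{?c<..k}. exp (-2 * y i))"
      unfolding rbp
    proof (intro prod_mono conjI)
      fix i assume i: "i \<in> {?c<..k}"
      show "0 \<le> (1 - y i)/(1 + y i)" using y_ge[OF i] y_lt[OF i] by simp
      show "(1 - y i)/(1 + y i) \<le> exp (-2 * y i)" using factor_upper[OF y_ge[OF i] y_lt[OF i]] .
    qed
    also have "\<dots> = exp (-2 * (\<Sum>i\<in>{?c<..k}. y i))"
      by (simp add: exp_sum sum_distrib_left)
    also have "\<dots> = exp (- 2 * (real k - real ?c) * (real k + real ?c - real n) / (real n + 1))"
      unfolding sy by (simp add: field_simps)
    finally show ?thesis .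
  qed
  assume h: "\<forall>i\<in>{?c<..k}. y i \<le> 1/2"
  have "exp (- 2 * (real k - real ?c) * (real k + real ?c - real n) / (real n + 1)
              - 4 * (\<Sum>i\<in>{?c<..k}. (y i)^2)) = exp (\<Sum>i\<in>{?c<..k}. (-2 * y i - 4 * (y i)^2))"
  proof -
    have "(\<Sum>i\<in>{?c<..k}. (-2 * y i - 4 * (y i)^2)) = -2 * (\<Sum>i\<in>{?c<..k}. y i) - 4 * (\<Sum>i\<in>{?c<..k}. (y i)^2)"
      by (simp add: sum_subtractf sum_distrib_left)
    then show ?thesis unfolding sy by (simp add: field_simps)
  qed
  also have "\<dots> = (\<Prod>i\<in>{?c<..k}. exp (-2 * y i - 4 * (y i)^2))"
    by (simp add: exp_sum)
  also have "\<dots> \<le> rb n k"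
    unfolding rbp
  proof (intro prod_mono conjI)
    fix i assume i: "i \<in> {?c<..k}"
    show "0 \<le> exp (-2 * y i - 4 * (y i)^2)" by simp
    show "exp (-2 * y i - 4 * (y i)^2) \<le> (1 - y i)/(1 + y i)"
      using factor_lower[OF y_ge[OF i]] h i by blast
  qed
  finally show "exp (- 2 * (real k - real ?c) * (real k + real ?c - real n) / (real n + 1)
              - 4 * (\<Sum>i\<in>{?c<..k}. (y i)^2)) \<le> rb n k" .
qed


lemma rb_bounds_ge2:
  assumes "n div 2 \<le> k" "k \<le> n"
  shows "rb n k \<le> exp (- ((2*real k - real n)^2 - 1) / (2*(real n + 1)))"
    and "\<bar>2*real k - real n\<bar> \<le> (real n + 1)/2 \<Longrightarrow>
         exp (- ((2*real k - real n)^2) / (2*(real n + 1)) - 2*(\<bar>2*real k - real n\<bar> + 1)*(2*real k - real n)^2/(real n + 1)^2) \<le> rb n k"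
proof -
  let ?c = "n div 2"
  define e where "e = real n - 2 * real ?c"
  define d where "d = 2*real k - real n"
  have e01: "0 \<le> e" "e \<le> 1" unfolding e_def by linarith+
  have e2: "e^2 \<le> 1" using e01 by (simp add: power_le_one)
  have D: "(real k - real ?c) * (real k + real ?c - real n) = (d^2 - e^2)/4"
    unfolding d_def e_def by (simp add: algebra_simps power2_eq_square)
  have np: "0 < real n + 1" by simp
  have Q: "- 2 * (real k - real ?c) * (real k + real ?c - real n) / (real n + 1) = - (d^2 - e^2) / (2*(real n + 1))"
  proof -
    have "- 2 * (real k - real ?c) * (real k + real ?c - real n) = -2 * ((real k - real ?c) * (real k + real ?c - real n))"
      by (simp only: mult.assoc)
    also have "\<dots> = -2 * ((d^2-e^2)/4)" by (simp only: D)
    finally have X: "- 2 * (real k - real ?c) * (real k + real ?c - real n) = -2 * ((d^2-e^2)/4)" .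
    show ?thesis unfolding X using np by (simp add: field_simps)
  qed
  show "rb n k \<le> exp (- ((2*real k - real n)^2 - 1) / (2*(real n + 1)))"
  proof -
    have "rb n k \<le> exp (- 2 * (real k - real ?c) * (real k + real ?c - real n) / (real n + 1))"
      by (rule rb_bounds_ge(1)[OF assms])
    also have "\<dots> = exp (- (d^2 - e^2) / (2*(real n + 1)))"
      by (simp only: Q)
    also have "\<dots> \<le> exp (- (d^2 - 1) / (2*(real n + 1)))"
      using e2 np by (simp add: divide_le_eq frac_le)
    finally show ?thesis unfolding d_def .
  qed
  assume dh: "\<bar>2*real k - real n\<bar> \<le> (real n + 1)/2"
  define y where "y = (\<lambda>i. (2*real i - real n - 1)/(real n + 1))"
  have yb: "0 \<le> y i \<and> y i \<le> \<bar>d\<bar>/(real n + 1)" if "i \<in> {?c<..k}" for i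
    using that np unfolding y_def d_def by (auto simp: divide_le_eq)
  have yh: "\<forall>i\<in>{?c<..k}. y i \<le> 1/2"
  proof
    fix i assume "i \<in> {?c<..k}"
    then have "y i \<le> \<bar>d\<bar>/(real n + 1)" using yb by blast
    also have "\<dots> \<le> 1/2" using dh np unfolding d_def by (simp add: divide_le_eq)
    finally show "y i \<le> 1/2" .
  qed
  have L: "exp (- 2 * (real k - real ?c) * (real k + real ?c - real n) / (real n + 1)
              - 4 * (\<Sum>i\<in>{?c<..k}. (y i)^2)) \<le> rb n k"
    using rb_bounds_ge(2)[OF assms] yh unfolding y_def by blast
  have S: "(\<Sum>i\<in>{?c<..k}. (y i)^2) \<le> (real k - real ?c) * (d^2/(real n + 1)^2)"
  proof -
    have "(\<Sum>i\<in>{?c<..k}. (y i)^2) \<le> (\<Sum>i\<in>{?c<..k}. (\<bar>d\<bar>/(real n + 1))^2)"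
      by (intro sum_mono power_mono) (use yb in auto)
    also have "\<dots> = (real k - real ?c) * (d^2/(real n + 1)^2)"
      using assms(1) by (simp add: power_divide of_nat_diff)
    finally show ?thesis .
  qed
  have kc: "2*(real k - real ?c) \<le> \<bar>d\<bar> + 1"
  proof -
    have "2*(real k - real ?c) = d + e" unfolding d_def e_def by simp
    moreover have "d \<le> \<bar>d\<bar>" by simp
    ultimately show ?thesis using e01 by linarith
  qed
  have "4 * (\<Sum>i\<in>{?c<..k}. (y i)^2) \<le> 4 * ((real k - real ?c) * (d^2/(real n + 1)^2))"
    using S by simp
  also have "\<dots> = 2 * (2*(real k - real ?c)) * (d^2/(real n + 1)^2)" by simp
  also have "\<dots> \<le> 2 * (\<bar>d\<bar> + 1) * (d^2/(real n + 1)^2)"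
    by (intro mult_right_mono mult_left_mono kc) auto
  finally have S4: "4 * (\<Sum>i\<in>{?c<..k}. (y i)^2) \<le> 2 * (\<bar>d\<bar> + 1) * d^2/(real n + 1)^2" by simp
  have D2: "- 2 * (real k - real ?c) * (real k + real ?c - real n) / (real n + 1) \<ge> - (d^2) / (2*(real n + 1))"
  proof -
    have "- 2 * (real k - real ?c) * (real k + real ?c - real n) / (real n + 1) = - (d^2 - e^2) / (2*(real n + 1))"
      by (rule Q)
    also have "\<dots> \<ge> - (d^2) / (2*(real n + 1))"
    proof -
      have "- (d^2) \<le> - (d^2 - e^2)" by simp
      then show ?thesis using np by (intro divide_right_mono) auto
    qed
    finally show ?thesis .
  qed
  have "exp (- (d^2) / (2*(real n + 1)) - 2*(\<bar>d\<bar> + 1)*d^2/(real n + 1)^2)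
      \<le> exp (- 2 * (real k - real ?c) * (real k + real ?c - real n) / (real n + 1)
              - 4 * (\<Sum>i\<in>{?c<..k}. (y i)^2))"
    using D2 S4 by simp
  also have "\<dots> \<le> rb n k" by (rule L)
  finally show "exp (- ((2*real k - real n)^2) / (2*(real n + 1)) - 2*(\<bar>2*real k - real n\<bar> + 1)*(2*real k - real n)^2/(real n + 1)^2) \<le> rb n k"
    unfolding d_def .
qed

lemma rb_sym: "k \<le> n \<Longrightarrow> rb n k = rb n (n - k)"
  unfolding rb_def by (simp add: binomial_symmetric[symmetric])

lemma rb_upper:
  assumes "k \<le> n"
  shows "rb n k \<le> exp (- ((2*real k - real n)^2 - 1) / (2*(real n + 1)))"
proof (cases "n div 2 \<le> k")
  case True then show ?thesis using rb_bounds_ge2(1)[OF True assms] by simp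
next
  case False
  then have "n div 2 \<le> n - k" by linarith
  from rb_bounds_ge2(1)[OF this] have "rb n (n - k) \<le> exp (- ((2*real (n-k) - real n)^2 - 1) / (2*(real n + 1)))" by simp
  moreover have "(2*real (n-k) - real n)^2 = (2*real k - real n)^2"
    using assms by (simp add: of_nat_diff power2_eq_square algebra_simps)
  ultimately show ?thesis using rb_sym[OF assms] by simp
qed

lemma rb_lower:
  assumes "k \<le> n" "\<bar>2*real k - real n\<bar> \<le> (real n + 1)/2"
  shows "exp (- ((2*real k - real n)^2) / (2*(real n + 1)) - 2*(\<bar>2*real k - real n\<bar> + 1)*(2*real k - real n)^2/(real n + 1)^2) \<le> rb n k"
proof (cases "n div 2 \<le> k")
  case True then show ?thesis using rb_bounds_ge2(2)[OF True assms(1)] assms(2) by simp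
next
  case False
  then have h: "n div 2 \<le> n - k" by linarith
  have e1: "(2*real (n-k) - real n)^2 = (2*real k - real n)^2"
    using assms by (simp add: of_nat_diff power2_eq_square algebra_simps)
  have e2: "\<bar>2*real (n-k) - real n\<bar> = \<bar>2*real k - real n\<bar>"
    using assms by (simp add: of_nat_diff abs_if algebra_simps)
  from rb_bounds_ge2(2)[OF h] assms(2) show ?thesis
    unfolding e1 e2 rb_sym[OF assms(1)] by simp
qed


lemma sum_pow_card:
  fixes h :: "nat \<Rightarrow> real"
  assumes "finite T"
  shows "(\<Sum>X\<in>Pow T. h (card X)) = (\<Sum>k\<in>{..card T}. real (card T choose k) * h k)"
proof -
  have "(\<Sum>X\<in>Pow T. h (card X)) = (\<Sum>k\<in>{..card T}. \<Sum>X\<in>{X \<in> Pow T. card X = k}. h (card X))"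
    using assms by (intro sum.group[symmetric]) (auto intro: card_mono)
  also have "\<dots> = (\<Sum>k\<in>{..card T}. real (card T choose k) * h k)"
  proof (rule sum.cong[OF refl])
    fix k assume "k \<in> {..card T}"
    have "(\<Sum>X\<in>{X \<in> Pow T. card X = k}. h (card X)) = (\<Sum>X\<in>{X \<in> Pow T. card X = k}. h k)"
      by (rule sum.cong) auto
    also have "\<dots> = real (card {X \<in> Pow T. card X = k}) * h k" by simp
    also have "{X \<in> Pow T. card X = k} = {B. B \<subseteq> T \<and> card B = k}" by auto
    finally show "(\<Sum>X\<in>{X \<in> Pow T. card X = k}. h (card X)) = real (card T choose k) * h k"
      using n_subsets[OF assms, of k] by simp
  qed
  finally show ?thesis .
qed

definition mkc :: "nat set \<Rightarrow> nat set \<Rightarrow> nat set \<Rightarrow> nat \<Rightarrow> real" where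
  "mkc A X Y = (\<lambda>i. if i \<in> A then (if i \<in> X \<union> Y then 1 else -1) else undefined)"

lemma card_split_real:
  assumes "finite B" "Y \<subseteq> B"
  shows "real (card (B \<inter> Y)) - real (card (B - Y)) = 2 * real (card Y) - real (card B)"
proof -
  have "B \<inter> Y = Y" using assms by auto
  moreover have "card (B - Y) = card B - card Y" using assms by (simp add: card_Diff_subset finite_subset)
  moreover have "card Y \<le> card B" using assms by (simp add: card_mono)
  ultimately show ?thesis by (simp add: of_nat_diff)
qed

lemma sum_mkc:
  fixes A T X Y :: "nat set"
  assumes "finite A" "T \<subseteq> A" "X \<subseteq> T" "Y \<subseteq> A - T"
  shows "(\<Sum>i\<in>T. mkc A X Y i) = 2 * real (card X) - real (card T)"
    and "(\<Sum>i\<in>A - T. mkc A X Y i) = 2 * real (card Y) - real (card (A - T))"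
proof -
  have fT: "finite T" using assms finite_subset by blast
  have "(\<Sum>i\<in>T. mkc A X Y i) = (\<Sum>i\<in>T. if i \<in> X then 1 else -1)"
    using assms by (intro sum.cong) (auto simp: mkc_def)
  also have "\<dots> = real (card (T \<inter> X)) - real (card (T - X))"
    using fT by (simp add: sum.If_cases Diff_eq)
  also have "\<dots> = 2 * real (card X) - real (card T)"
    using assms fT by (intro card_split_real) auto
  finally show "(\<Sum>i\<in>T. mkc A X Y i) = 2 * real (card X) - real (card T)" .
  have fU: "finite (A - T)" using assms by simp
  have "(\<Sum>i\<in>A - T. mkc A X Y i) = (\<Sum>i\<in>A - T. if i \<in> Y then 1 else -1)"
    using assms by (intro sum.cong) (auto simp: mkc_def)
  also have "\<dots> = real (card ((A - T) \<inter> Y)) - real (card ((A - T) - Y))"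
    using fU by (simp add: sum.If_cases Diff_eq)
  also have "\<dots> = 2 * real (card Y) - real (card (A - T))"
    using assms fU by (intro card_split_real) auto
  finally show "(\<Sum>i\<in>A - T. mkc A X Y i) = 2 * real (card Y) - real (card (A - T))" .
qed

lemma sum_configs:
  fixes \<Phi> :: "real \<Rightarrow> real \<Rightarrow> real" and A T :: "nat set"
  assumes "finite A" "T \<subseteq> A"
  shows "(\<Sum>\<sigma>\<in>A \<rightarrow>\<^sub>E {-1, 1}. \<Phi> (\<Sum>i\<in>T. \<sigma> i) (\<Sum>i\<in>A - T. \<sigma> i))
       = (\<Sum>k\<in>{..card T}. \<Sum>l\<in>{..card (A - T)}. real (card T choose k) * real (card (A - T) choose l)
            * \<Phi> (2 * real k - real (card T)) (2 * real l - real (card (A - T))))"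
proof -
  have fT: "finite T" using assms finite_subset by blast
  have fU: "finite (A - T)" using assms by simp
  let ?j = "\<lambda>\<sigma>::nat\<Rightarrow>real. ({i\<in>T. \<sigma> i = 1}, {i\<in>A - T. \<sigma> i = 1})"
  let ?i = "\<lambda>(X,Y). mkc A X Y"
  have "(\<Sum>\<sigma>\<in>A \<rightarrow>\<^sub>E {-1, 1}. \<Phi> (\<Sum>i\<in>T. \<sigma> i) (\<Sum>i\<in>A - T. \<sigma> i))
      = (\<Sum>(X,Y)\<in>Pow T \<times> Pow (A - T). \<Phi> (2 * real (card X) - real (card T)) (2 * real (card Y) - real (card (A - T))))"
  proof (rule sum.reindex_bij_witness[where i = ?i and j = ?j])
    fix \<sigma> assume s: "\<sigma> \<in> A \<rightarrow>\<^sub>E ({-1, 1}::real set)"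
    show "?i (?j \<sigma>) = \<sigma>"
    proof
      fix x show "?i (?j \<sigma>) x = \<sigma> x"
      proof (cases "x \<in> A")
        case True
        then have "\<sigma> x \<in> {-1,1}" using PiE_mem[OF s] by blast
        then show ?thesis using True assms(2) by (auto simp: mkc_def)
      next
        case False
        then show ?thesis using s by (auto simp: mkc_def PiE_def extensional_def)
      qed
    qed
    show "?j \<sigma> \<in> Pow T \<times> Pow (A - T)" by auto
    have e: "?i (?j \<sigma>) = \<sigma>"
    proof
      fix x show "?i (?j \<sigma>) x = \<sigma> x"
      proof (cases "x \<in> A")
        case True
        then have "\<sigma> x \<in> {-1,1}" using PiE_mem[OF s] by blast
        then show ?thesis using True assms(2) by (auto simp: mkc_def)
      next
        case False
        then show ?thesis using s by (auto simp: mkc_def PiE_def extensional_def)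
      qed
    qed
    show "(\<lambda>(X, Y). \<Phi> (2 * real (card X) - real (card T)) (2 * real (card Y) - real (card (A - T)))) (?j \<sigma>)
        = \<Phi> (\<Sum>i\<in>T. \<sigma> i) (\<Sum>i\<in>A - T. \<sigma> i)"
    proof -
      have X: "{i\<in>T. \<sigma> i = 1} \<subseteq> T" and Y: "{i\<in>A - T. \<sigma> i = 1} \<subseteq> A - T" by auto
      have e': "mkc A {i\<in>T. \<sigma> i = 1} {i\<in>A - T. \<sigma> i = 1} = \<sigma>" using e by simp
      show ?thesis using sum_mkc[OF assms X Y, unfolded e'] by simp
    qed
  next
    fix b assume b: "b \<in> Pow T \<times> Pow (A - T)"
    obtain X Y where bXY: "b = (X, Y)" by fastforce
    with b have XY: "X \<subseteq> T" "Y \<subseteq> A - T" by auto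
    show "?j (?i b) = b" unfolding bXY using XY assms(2) by (auto simp: mkc_def)
    show "?i b \<in> A \<rightarrow>\<^sub>E {-1, 1}" unfolding bXY by (auto simp: mkc_def split: if_split_asm)
  qed
  also have "\<dots> = (\<Sum>X\<in>Pow T. \<Sum>Y\<in>Pow (A - T). \<Phi> (2 * real (card X) - real (card T)) (2 * real (card Y) - real (card (A - T))))"
    by (simp add: sum.cartesian_product)
  also have "\<dots> = (\<Sum>X\<in>Pow T. \<Sum>l\<in>{..card (A - T)}. real (card (A - T) choose l) * \<Phi> (2 * real (card X) - real (card T)) (2 * real l - real (card (A - T))))"
    by (intro sum.cong refl sum_pow_card fU)
  also have "\<dots> = (\<Sum>k\<in>{..card T}. real (card T choose k) * (\<Sum>l\<in>{..card (A - T)}. real (card (A - T) choose l) * \<Phi> (2 * real k - real (card T)) (2 * real l - real (card (A - T)))))"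
    by (rule sum_pow_card[OF fT, where h = "\<lambda>k. (\<Sum>l\<in>{..card (A - T)}. real (card (A - T) choose l) * \<Phi> (2 * real k - real (card T)) (2 * real l - real (card (A - T))))"])
  also have "\<dots> = (\<Sum>k\<in>{..card T}. \<Sum>l\<in>{..card (A - T)}. real (card T choose k) * real (card (A - T) choose l)
            * \<Phi> (2 * real k - real (card T)) (2 * real l - real (card (A - T))))"
    by (simp add: sum_distrib_left mult.assoc)
  finally show ?thesis .
qed

lemma ham_sums:
  fixes \<sigma> :: "nat \<Rightarrow> real" and A T :: "nat set"
  assumes "finite A" "T \<subseteq> A"
  shows "(\<Sum>i\<in>A. \<Sum>j\<in>A. if same_block T i j then \<sigma> i * \<sigma> j else 0) = (\<Sum>i\<in>T. \<sigma> i)^2 + (\<Sum>i\<in>A - T. \<sigma> i)^2"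
    and "(\<Sum>i\<in>A. \<Sum>j\<in>A. if same_block T i j then 0 else \<sigma> i * \<sigma> j) = 2 * (\<Sum>i\<in>T. \<sigma> i) * (\<Sum>i\<in>A - T. \<sigma> i)"
proof -
  let ?m1 = "\<Sum>i\<in>T. \<sigma> i" and ?m2 = "\<Sum>i\<in>A - T. \<sigma> i"
  have AT: "A \<inter> {x. x \<in> T} = T" "A \<inter> - {x. x \<in> T} = A - T" "A \<inter> T = T" "A \<inter> {j. j \<notin> T} = A - T"
     "A \<inter> - T = A - T" "A \<inter> - {j. j \<notin> T} = T" using assms by auto
  have inner1: "(\<Sum>j\<in>A. if same_block T i j then \<sigma> i * \<sigma> j else 0) = \<sigma> i * (if i \<in> T then ?m1 else ?m2)" for i
  proof -
    have "(\<Sum>j\<in>A. if same_block T i j then \<sigma> i * \<sigma> j else 0) = \<sigma> i * (\<Sum>j\<in>A. if same_block T i j then \<sigma> j else 0)"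
      by (subst sum_distrib_left) (rule sum.cong, auto)
    also have "(\<Sum>j\<in>A. if same_block T i j then \<sigma> j else 0) = (if i \<in> T then ?m1 else ?m2)"
      using assms(1) by (cases "i \<in> T") (simp_all add: same_block_def sum.If_cases AT)
    finally show ?thesis .
  qed
  have inner2: "(\<Sum>j\<in>A. if same_block T i j then 0 else \<sigma> i * \<sigma> j) = \<sigma> i * (if i \<in> T then ?m2 else ?m1)" for i
  proof -
    have "(\<Sum>j\<in>A. if same_block T i j then 0 else \<sigma> i * \<sigma> j) = \<sigma> i * (\<Sum>j\<in>A. if same_block T i j then 0 else \<sigma> j)"
      by (subst sum_distrib_left) (rule sum.cong, auto)
    also have "(\<Sum>j\<in>A. if same_block T i j then 0 else \<sigma> j) = (if i \<in> T then ?m2 else ?m1)"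
      using assms(1) by (cases "i \<in> T") (simp_all add: same_block_def sum.If_cases AT)
    finally show ?thesis .
  qed
  have "(\<Sum>i\<in>A. \<sigma> i * (if i \<in> T then ?m1 else ?m2)) = ?m1 * ?m1 + ?m2 * ?m2"
    using assms(1) by (simp add: if_distrib sum.If_cases AT sum_distrib_right)
  then show "(\<Sum>i\<in>A. \<Sum>j\<in>A. if same_block T i j then \<sigma> i * \<sigma> j else 0) = ?m1^2 + ?m2^2"
    by (simp add: inner1 power2_eq_square)
  have "(\<Sum>i\<in>A. \<sigma> i * (if i \<in> T then ?m2 else ?m1)) = ?m1 * ?m2 + ?m2 * ?m1"
    using assms(1) by (simp add: if_distrib sum.If_cases AT sum_distrib_right)
  then show "(\<Sum>i\<in>A. \<Sum>j\<in>A. if same_block T i j then 0 else \<sigma> i * \<sigma> j) = 2 * ?m1 * ?m2"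
    by (simp add: inner2)
qed


definition Gf :: "real \<Rightarrow> real \<Rightarrow> (real \<times> real \<Rightarrow> real) \<Rightarrow> real \<Rightarrow> real \<Rightarrow> real" where
  "Gf \<alpha> \<beta> \<phi> u v = exp (\<beta>/4*(u^2+v^2) + \<alpha>/2*(u * v)) * \<phi> ((u+v)/sqrt 2, (u-v)/sqrt 2)"

definition pg :: "nat \<Rightarrow> nat \<Rightarrow> real" where
  "pg n k = (2*real k - real n)/sqrt (real n)"

definition Ssum :: "real \<Rightarrow> real \<Rightarrow> (real \<times> real \<Rightarrow> real) \<Rightarrow> nat \<Rightarrow> real" where
  "Ssum \<alpha> \<beta> \<phi> n = (\<Sum>k\<in>{..n}. \<Sum>l\<in>{..n}. rb n k * rb n l * Gf \<alpha> \<beta> \<phi> (pg n k) (pg n l))"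

lemma exp_ham_G:
  fixes \<sigma> :: "nat \<Rightarrow> real"
  assumes n: "0 < n" and T: "T \<subseteq> {1..2*n}"
  defines "m1 \<equiv> (\<Sum>i\<in>T. \<sigma> i)" and "m2 \<equiv> (\<Sum>i\<in>{1..2*n} - T. \<sigma> i)"
  shows "exp (- hamiltonian (2*n) \<alpha> \<beta> T \<sigma>) * \<phi> (w1 (2*n) \<sigma>, w2 (2*n) T \<sigma>)
       = Gf \<alpha> \<beta> \<phi> (m1 / sqrt (real n)) (m2 / sqrt (real n))"
proof -
  have fin: "finite {1..2*n}" by simp
  have H: "- hamiltonian (2*n) \<alpha> \<beta> T \<sigma> = \<beta>/(4*real n)*(m1^2+m2^2) + \<alpha>/(4*real n)*(2*m1*m2)"
    unfolding hamiltonian_def ham_sums[OF fin T] m1_def m2_def by simp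
  have sn: "sqrt (real n) > 0" using n by simp
  have sq: "(sqrt (real n))^2 = real n" by simp
  have H2: "\<beta>/(4*real n)*(m1^2+m2^2) + \<alpha>/(4*real n)*(2*m1*m2)
      = \<beta>/4*((m1 / sqrt (real n))^2+(m2 / sqrt (real n))^2) + \<alpha>/2*((m1 / sqrt (real n))*(m2 / sqrt (real n)))"
    using n by (simp add: power_divide sq field_simps power2_eq_square[of "sqrt (real n)", symmetric])
  have s2: "sqrt (real (2*n)) = sqrt 2 * sqrt (real n)" by (simp add: real_sqrt_mult)
  have w1e: "w1 (2*n) \<sigma> = (m1 / sqrt (real n) + m2 / sqrt (real n)) / sqrt 2"
  proof -
    have "(\<Sum>i\<in>{1..2*n}. \<sigma> i) = m1 + m2" unfolding m1_def m2_def
      by (metis add.commute sum.subset_diff[OF T fin])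
    then show ?thesis unfolding w1_def s2 using sn by (simp add: field_simps)
  qed
  have w2e: "w2 (2*n) T \<sigma> = (m1 / sqrt (real n) - m2 / sqrt (real n)) / sqrt 2"
    unfolding w2_def s2 m1_def m2_def using sn by (simp add: field_simps)
  show ?thesis unfolding Gf_def H H2 w1e w2e ..
qed

lemma sum_configs2:
  fixes \<Phi> :: "real \<Rightarrow> real \<Rightarrow> real"
  assumes T: "T \<subseteq> {1..2*n}" "card T = n"
  shows "(\<Sum>\<sigma>\<in>configs (2*n). \<Phi> (\<Sum>i\<in>T. \<sigma> i) (\<Sum>i\<in>{1..2*n} - T. \<sigma> i))
       = (\<Sum>k\<in>{..n}. \<Sum>l\<in>{..n}. real (n choose k) * real (n choose l)
            * \<Phi> (2 * real k - real n) (2 * real l - real n))"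
proof -
  have c2: "card ({1..2*n} - T) = n" using T by (simp add: card_Diff_subset finite_subset)
  show ?thesis unfolding configs_def using sum_configs[of "{1..2*n}" T \<Phi>] T c2 by simp
qed

lemma gibbs_sum_G:
  assumes n: "0 < n" and T: "T \<subseteq> {1..2*n}" "card T = n"
  shows "(\<Sum>\<sigma>\<in>configs (2*n). exp (- hamiltonian (2*n) \<alpha> \<beta> T \<sigma>) * \<phi> (w1 (2*n) \<sigma>, w2 (2*n) T \<sigma>))
     = real (n choose (n div 2))^2 * Ssum \<alpha> \<beta> \<phi> n"
proof -
  have "(\<Sum>\<sigma>\<in>configs (2*n). exp (- hamiltonian (2*n) \<alpha> \<beta> T \<sigma>) * \<phi> (w1 (2*n) \<sigma>, w2 (2*n) T \<sigma>))
      = (\<Sum>\<sigma>\<in>configs (2*n). (\<lambda>a b. Gf \<alpha> \<beta> \<phi> (a / sqrt (real n)) (b / sqrt (real n))) (\<Sum>i\<in>T. \<sigma> i) (\<Sum>i\<in>{1..2*n} - T. \<sigma> i))"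
    using exp_ham_G[OF n T(1)] by simp
  also have "\<dots> = (\<Sum>k\<in>{..n}. \<Sum>l\<in>{..n}. real (n choose k) * real (n choose l)
            * Gf \<alpha> \<beta> \<phi> (pg n k) (pg n l))"
    using sum_configs2[OF T, of "\<lambda>a b. Gf \<alpha> \<beta> \<phi> (a / sqrt (real n)) (b / sqrt (real n))"] unfolding pg_def by simp
  also have "\<dots> = real (n choose (n div 2))^2 * Ssum \<alpha> \<beta> \<phi> n"
  proof -
    have c: "real (n choose (n div 2)) \<noteq> 0" using central_pos[of n] by linarith
    show ?thesis unfolding Ssum_def sum_distrib_left
      by (intro sum.cong refl) (use c in \<open>simp add: rb_def power2_eq_square field_simps\<close>)
  qed
  finally show ?thesis .
qed

lemma gibbs_integral:
  assumes n: "0 < n" and T: "T \<subseteq> {1..2*n}" "card T = n"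
  shows "integral\<^sup>L (gibbs_measure (2*n) \<alpha> \<beta> T) (\<lambda>\<sigma>. f (w1 (2*n) \<sigma>, w2 (2*n) T \<sigma>))
       = Ssum \<alpha> \<beta> f n / Ssum \<alpha> \<beta> (\<lambda>_. 1) n"
proof -
  let ?Z = "\<Sum>\<tau>\<in>configs (2*n). exp (- hamiltonian (2*n) \<alpha> \<beta> T \<tau>)"
  have fin: "finite (configs (2*n))" unfolding configs_def by (simp add: finite_PiE)
  have "integral\<^sup>L (gibbs_measure (2*n) \<alpha> \<beta> T) (\<lambda>\<sigma>. f (w1 (2*n) \<sigma>, w2 (2*n) T \<sigma>))
      = (\<Sum>\<sigma>\<in>configs (2*n). (exp (- hamiltonian (2*n) \<alpha> \<beta> T \<sigma>) / ?Z) *\<^sub>R f (w1 (2*n) \<sigma>, w2 (2*n) T \<sigma>))"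
    unfolding gibbs_measure_def
    by (rule lebesgue_integral_point_measure_finite[OF fin]) (auto intro!: sum_nonneg divide_nonneg_nonneg)
  also have "\<dots> = (\<Sum>\<sigma>\<in>configs (2*n). exp (- hamiltonian (2*n) \<alpha> \<beta> T \<sigma>) * f (w1 (2*n) \<sigma>, w2 (2*n) T \<sigma>)) / ?Z"
    by (simp add: sum_divide_distrib)
  also have "\<dots> = Ssum \<alpha> \<beta> f n / Ssum \<alpha> \<beta> (\<lambda>_. 1) n"
  proof -
    have Z: "?Z = real (n choose (n div 2))^2 * Ssum \<alpha> \<beta> (\<lambda>_. 1) n"
      using gibbs_sum_G[OF n T, of \<alpha> \<beta> "\<lambda>_. 1"] by simp
    show ?thesis unfolding Z gibbs_sum_G[OF n T] using central_pos[of n] by simp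
  qed
  finally show ?thesis .
qed


definition cell :: "nat \<Rightarrow> nat \<Rightarrow> real set" where
  "cell n k = {pg n k - 1/sqrt (real n) ..< pg n k + 1/sqrt (real n)}"

definition Kc :: "nat \<Rightarrow> real \<Rightarrow> int" where
  "Kc n x = \<lfloor>(x * sqrt (real n) + real n + 1)/2\<rfloor>"

definition hstep :: "real \<Rightarrow> real \<Rightarrow> (real \<times> real \<Rightarrow> real) \<Rightarrow> nat \<Rightarrow> real \<times> real \<Rightarrow> real" where
  "hstep \<alpha> \<beta> \<phi> n = (\<lambda>z. \<Sum>k\<in>{..n}. \<Sum>l\<in>{..n}. rb n k * rb n l * Gf \<alpha> \<beta> \<phi> (pg n k) (pg n l) * indicator (cell n k \<times> cell n l) z)"

lemma cell_borel[measurable]: "cell n k \<in> sets borel"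
  unfolding cell_def by simp

lemma int_box:
  fixes a b c d :: real
  assumes "a \<le> b" "c \<le> d"
  shows "integrable lborel (indicator ({a..<b} \<times> {c..<d}) :: real \<times> real \<Rightarrow> real)"
    and "integral\<^sup>L lborel (indicator ({a..<b} \<times> {c..<d}) :: real \<times> real \<Rightarrow> real) = (b - a) * (d - c)"
proof -
  have e: "emeasure (lborel :: (real \<times> real) measure) ({a..<b} \<times> {c..<d}) = ennreal ((b - a) * (d - c))"
    unfolding lborel_prod[symmetric]
    using assms by (simp add: lborel.emeasure_pair_measure_Times ennreal_mult)
  show "integrable lborel (indicator ({a..<b} \<times> {c..<d}) :: real \<times> real \<Rightarrow> real)"
  proof (rule integrable_real_indicator)
    show "{a..<b} \<times> {c..<d} \<in> sets lborel" unfolding sets_lborel borel_prod[symmetric] by (intro pair_measureI) auto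
  qed (auto simp: e)
  show "integral\<^sup>L lborel (indicator ({a..<b} \<times> {c..<d}) :: real \<times> real \<Rightarrow> real) = (b - a) * (d - c)"
    using assms by (simp add: integral_indicator measure_def e)
qed

lemma hstep_integral:
  assumes n: "0 < n"
  shows "integrable lborel (hstep \<alpha> \<beta> \<phi> n)"
    and "integral\<^sup>L lborel (hstep \<alpha> \<beta> \<phi> n) = 4 / real n * Ssum \<alpha> \<beta> \<phi> n"
proof -
  have sn: "0 < sqrt (real n)" using n by simp
  have le: "pg n k - 1/sqrt (real n) \<le> pg n k + 1/sqrt (real n)" for k using sn by simp
  have w: "(pg n k + 1/sqrt (real n)) - (pg n k - 1/sqrt (real n)) = 2/sqrt (real n)" for k by simp
  have ii: "integrable lborel (indicator (cell n k \<times> cell n l) :: real \<times> real \<Rightarrow> real)" for k l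
    unfolding cell_def by (rule int_box(1)[OF le le])
  show "integrable lborel (hstep \<alpha> \<beta> \<phi> n)"
    unfolding hstep_def using ii by (intro Bochner_Integration.integrable_sum integrable_mult_right) auto
  let ?T = "\<lambda>k l z. rb n k * rb n l * Gf \<alpha> \<beta> \<phi> (pg n k) (pg n l) * indicator (cell n k \<times> cell n l) z"
  have iT: "integrable lborel (?T k l)" for k l using ii by (intro integrable_mult_right) auto
  have vT: "integral\<^sup>L lborel (?T k l) = rb n k * rb n l * Gf \<alpha> \<beta> \<phi> (pg n k) (pg n l) * ((2/sqrt (real n)) * (2/sqrt (real n)))" for k l
    unfolding integral_mult_right_zero cell_def int_box(2)[OF le le] w by simp
  have "integral\<^sup>L lborel (hstep \<alpha> \<beta> \<phi> n) = (\<Sum>k\<in>{..n}. integral\<^sup>L lborel (\<lambda>z. \<Sum>l\<in>{..n}. ?T k l z))"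
    unfolding hstep_def
    by (rule Bochner_Integration.integral_sum, rule Bochner_Integration.integrable_sum, rule iT)
  also have "\<dots> = (\<Sum>k\<in>{..n}. \<Sum>l\<in>{..n}. integral\<^sup>L lborel (?T k l))"
    by (intro sum.cong refl Bochner_Integration.integral_sum iT)
  also have "\<dots> = (\<Sum>k\<in>{..n}. \<Sum>l\<in>{..n}. rb n k * rb n l * Gf \<alpha> \<beta> \<phi> (pg n k) (pg n l) * ((2/sqrt (real n)) * (2/sqrt (real n))))"
    unfolding vT ..
  also have "\<dots> = 4 / real n * Ssum \<alpha> \<beta> \<phi> n"
    unfolding Ssum_def sum_distrib_left
    using n by (intro sum.cong refl) (simp add: field_simps)
  finally show "integral\<^sup>L lborel (hstep \<alpha> \<beta> \<phi> n) = 4 / real n * Ssum \<alpha> \<beta> \<phi> n" .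
qed

lemma cell_iff:
  assumes n: "0 < n"
  shows "x \<in> cell n k \<longleftrightarrow> int k = Kc n x"
proof -
  have sn: "0 < sqrt (real n)" using n by simp
  have e1: "pg n k - 1/sqrt (real n) = (2*real k - real n - 1) / sqrt (real n)"
    unfolding pg_def by (simp add: diff_divide_distrib)
  have e2: "pg n k + 1/sqrt (real n) = (2*real k - real n + 1) / sqrt (real n)"
    unfolding pg_def by (simp add: add_divide_distrib)
  have "x \<in> cell n k \<longleftrightarrow> (2*real k - real n - 1) \<le> x * sqrt (real n) \<and> x * sqrt (real n) < 2*real k - real n + 1"
    unfolding cell_def e1 e2 using sn by (simp add: pos_divide_le_eq pos_less_divide_eq)
  also have "\<dots> \<longleftrightarrow> real_of_int (int k) \<le> (x * sqrt (real n) + real n + 1)/2 \<and> (x * sqrt (real n) + real n + 1)/2 < real_of_int (int k) + 1"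
    by (auto simp: field_simps)
  also have "\<dots> \<longleftrightarrow> int k = Kc n x"
    unfolding Kc_def using floor_eq_iff[of "(x * sqrt (real n) + real n + 1)/2" "int k"] by auto
  finally show ?thesis .
qed

lemma sum_cell_collapse:
  fixes g :: "nat \<Rightarrow> real"
  assumes n: "0 < n"
  shows "(\<Sum>k\<in>{..n}. g k * indicator (cell n k) x) = (if 0 \<le> Kc n x \<and> Kc n x \<le> int n then g (nat (Kc n x)) else 0)"
proof -
  have "(\<Sum>k\<in>{..n}. g k * indicator (cell n k) x) = (\<Sum>k\<in>{..n}. if k = nat (Kc n x) \<and> 0 \<le> Kc n x then g k else 0)"
    by (intro sum.cong refl) (auto simp: cell_iff[OF n] indicator_def)
  also have "\<dots> = (if 0 \<le> Kc n x \<and> Kc n x \<le> int n then g (nat (Kc n x)) else 0)"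
    by (cases "0 \<le> Kc n x") (auto simp: sum.delta' nat_le_iff)
  finally show ?thesis .
qed

lemma hstep_eval:
  assumes n: "0 < n"
  shows "hstep \<alpha> \<beta> \<phi> n (x, y) =
    (if 0 \<le> Kc n x \<and> Kc n x \<le> int n \<and> 0 \<le> Kc n y \<and> Kc n y \<le> int n
     then rb n (nat (Kc n x)) * rb n (nat (Kc n y)) * Gf \<alpha> \<beta> \<phi> (pg n (nat (Kc n x))) (pg n (nat (Kc n y)))
     else 0)"
proof -
  have "hstep \<alpha> \<beta> \<phi> n (x, y) = (\<Sum>k\<in>{..n}. (\<Sum>l\<in>{..n}. rb n k * rb n l * Gf \<alpha> \<beta> \<phi> (pg n k) (pg n l) * indicator (cell n l) y) * indicator (cell n k) x)"
    unfolding hstep_def sum_distrib_right by (intro sum.cong refl) (simp add: indicator_times mult_ac)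
  also have "\<dots> = (\<Sum>k\<in>{..n}. (if 0 \<le> Kc n y \<and> Kc n y \<le> int n then rb n k * rb n (nat (Kc n y)) * Gf \<alpha> \<beta> \<phi> (pg n k) (pg n (nat (Kc n y))) else 0) * indicator (cell n k) x)"
    by (subst sum_cell_collapse[OF n]) (rule refl)
  also have "\<dots> = (if 0 \<le> Kc n x \<and> Kc n x \<le> int n \<and> 0 \<le> Kc n y \<and> Kc n y \<le> int n
     then rb n (nat (Kc n x)) * rb n (nat (Kc n y)) * Gf \<alpha> \<beta> \<phi> (pg n (nat (Kc n x))) (pg n (nat (Kc n y)))
     else 0)"
    by (subst sum_cell_collapse[OF n]) auto
  finally show ?thesis .
qed


lemma cell_close:
  assumes "x \<in> cell n k"
  shows "\<bar>pg n k - x\<bar> \<le> 1 / sqrt (real n)"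
  using assms unfolding cell_def by auto

lemma asym_limits:
  "(\<lambda>n. real n / (real n + 1)) \<longlonglongrightarrow> 1"
  "(\<lambda>n. 1 / (real n + 1)) \<longlonglongrightarrow> 0"
  "(\<lambda>n. sqrt (real n) * real n / (real n + 1)^2) \<longlonglongrightarrow> 0"
  "(\<lambda>n. real n / (real n + 1)^2) \<longlonglongrightarrow> 0"
  "(\<lambda>n. sqrt (real n) / (real n + 1)) \<longlonglongrightarrow> 0"
  "(\<lambda>n. 1 / sqrt (real n)) \<longlonglongrightarrow> 0"
  by real_asymp+

lemma pg_limit:
  assumes ev: "\<forall>\<^sub>F n in sequentially. x \<in> cell n (k n)"
  shows "(\<lambda>n. pg n (k n)) \<longlonglongrightarrow> x"
proof -
  have "(\<lambda>n. pg n (k n) - x) \<longlonglongrightarrow> 0"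
  proof (rule Lim_null_comparison)
    show "\<forall>\<^sub>F n in sequentially. norm (pg n (k n) - x) \<le> 1 / sqrt (real n)"
      using ev by eventually_elim (auto dest: cell_close)
    show "(\<lambda>n. 1 / sqrt (real n)) \<longlonglongrightarrow> 0" by (rule asym_limits(6))
  qed
  then show ?thesis by (simp add: LIM_zero_iff)
qed

lemma aux_U:
  fixes Q t :: real assumes "0 \<le> t"
  shows "exp (- (Q * t - 1) / (2*(t + 1))) = exp (- (Q * (t / (t + 1)) - 1 / (t + 1)) / 2)"
proof -
  have e: "Q * (t / (t + 1)) - 1 / (t + 1) = (Q*t - 1)/(t+1)" by (simp add: diff_divide_distrib)
  show ?thesis unfolding e by (simp add: divide_divide_eq_left mult.commute) (metis minus_diff_eq minus_divide_left)
qed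

lemma aux_L:
  fixes Q t a s :: real assumes "0 \<le> t"
  shows "exp (- (Q * t) / (2*(t + 1)) - 2*(a * s + 1)*(Q * t)/(t + 1)^2)
       = exp (- (Q * (t / (t + 1))) / 2 - 2 * (a * (s * t / (t + 1)^2) + t / (t + 1)^2) * Q)"
proof -
  have e1: "- (Q * (t / (t + 1))) / 2 = - (Q * t) / (2*(t + 1))" by (simp add: divide_divide_eq_left mult.commute)
  have e2: "2 * (a * (s * t / (t + 1)^2) + t / (t + 1)^2) * Q = 2*(a * s + 1)*(Q * t)/(t + 1)^2"
    by (simp add: add_divide_distrib[symmetric] algebra_simps)
  show ?thesis unfolding e1 e2 ..
qed

lemma rb_limit:
  assumes ev: "\<forall>\<^sub>F n in sequentially. k n \<le> n \<and> x \<in> cell n (k n)"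
  shows "(\<lambda>n. rb n (k n)) \<longlonglongrightarrow> exp (- (x^2) / 2)"
proof -
  define q where "q n = pg n (k n)" for n
  have q: "q \<longlonglongrightarrow> x" unfolding q_def by (rule pg_limit) (use ev in \<open>eventually_elim, auto\<close>)
  define U where "U n = exp (- (q n ^ 2 * (real n / (real n + 1)) - 1 / (real n + 1)) / 2)" for n
  define L where "L n = exp (- (q n ^ 2 * (real n / (real n + 1))) / 2
      - 2 * (\<bar>q n\<bar> * (sqrt (real n) * real n / (real n + 1)^2) + real n / (real n + 1)^2) * q n ^ 2)" for n
  have lim: "(\<lambda>n. - (q n ^ 2 * (real n / (real n + 1)) - 1 / (real n + 1)) / 2) \<longlonglongrightarrow> - (x^2 * 1 - 0) / 2"
    by (intro tendsto_intros q asym_limits) auto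
  then have U: "U \<longlonglongrightarrow> exp (- (x^2) / 2)" unfolding U_def by (auto intro: tendsto_exp)
  have lim2: "(\<lambda>n. - (q n ^ 2 * (real n / (real n + 1))) / 2
      - 2 * (\<bar>q n\<bar> * (sqrt (real n) * real n / (real n + 1)^2) + real n / (real n + 1)^2) * q n ^ 2)
      \<longlonglongrightarrow> - (x^2 * 1) / 2 - 2 * (\<bar>x\<bar> * 0 + 0) * x^2"
    by (intro tendsto_intros q asym_limits) auto
  then have L: "L \<longlonglongrightarrow> exp (- (x^2) / 2)" unfolding L_def by (auto intro: tendsto_exp)
  have small: "\<forall>\<^sub>F n in sequentially. \<bar>q n\<bar> * (sqrt (real n) / (real n + 1)) < 1/2"
  proof -
    have "(\<lambda>n. \<bar>q n\<bar> * (sqrt (real n) / (real n + 1))) \<longlonglongrightarrow> \<bar>x\<bar> * 0"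
      by (intro tendsto_intros q asym_limits)
    from order_tendstoD(2)[OF this, of "1/2"] show ?thesis by simp
  qed
  have pos: "\<forall>\<^sub>F n in sequentially. 0 < n" by (simp add: eventually_gt_at_top)
  have dd: "(2 * real (k n) - real n) = q n * sqrt (real n)" if "0 < n" for n
    unfolding q_def pg_def using that by simp
  have dd2: "(2 * real (k n) - real n)^2 = q n ^ 2 * real n" if "0 < n" for n
    unfolding dd[OF that] by (simp add: power_mult_distrib)
  show ?thesis
  proof (rule tendsto_sandwich[OF _ _ L U])
    show "\<forall>\<^sub>F n in sequentially. rb n (k n) \<le> U n"
      using ev pos
    proof eventually_elim
      case (elim n)
      have "rb n (k n) \<le> exp (- ((2*real (k n) - real n)^2 - 1) / (2*(real n + 1)))"
        using rb_upper elim by blast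
      also have "\<dots> = U n" unfolding U_def dd2[OF elim(2)]
        by (rule aux_U) simp
      finally show ?case .
    qed
    show "\<forall>\<^sub>F n in sequentially. L n \<le> rb n (k n)"
      using ev pos small
    proof eventually_elim
      case (elim n)
      have sn: "0 < sqrt (real n)" using elim by simp
      have ad: "\<bar>2*real (k n) - real n\<bar> = \<bar>q n\<bar> * sqrt (real n)"
        unfolding dd[OF elim(2)] by (simp add: abs_mult)
      have "\<bar>q n\<bar> * sqrt (real n) \<le> (real n + 1)/2"
        using elim(3) by (simp add: field_simps)
      then have c: "\<bar>2*real (k n) - real n\<bar> \<le> (real n + 1)/2" unfolding ad .
      have "L n = exp (- ((2*real (k n) - real n)^2) / (2*(real n + 1)) - 2*(\<bar>2*real (k n) - real n\<bar> + 1)*(2*real (k n) - real n)^2/(real n + 1)^2)"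
        unfolding L_def dd2[OF elim(2)] ad by (rule aux_L[symmetric]) simp
      also have "\<dots> \<le> rb n (k n)" using rb_lower elim c by blast
      finally show ?case .
    qed
  qed
qed


lemma Gf_bound:
  assumes "0 \<le> \<alpha>" "\<And>z. \<bar>\<phi> z\<bar> \<le> B"
  shows "\<bar>Gf \<alpha> \<beta> \<phi> u v\<bar> \<le> B * exp ((\<alpha> + \<beta>)/4 * (u^2 + v^2))"
proof -
  have "\<alpha>/2*(u * v) \<le> \<alpha>/4*(u^2+v^2)"
  proof -
    have "2*(u * v) \<le> u^2 + v^2" using sum_squares_bound[of u v] by simp
    then have "\<alpha> * (2*(u * v)) \<le> \<alpha> * (u^2 + v^2)" using assms(1) by (rule mult_left_mono)
    then show ?thesis by (simp add: algebra_simps)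
  qed
  then have "\<beta>/4*(u^2+v^2) + \<alpha>/2*(u * v) \<le> (\<alpha> + \<beta>)/4 * (u^2 + v^2)"
    by (simp add: algebra_simps add_divide_distrib)
  then have e: "exp (\<beta>/4*(u^2+v^2) + \<alpha>/2*(u * v)) \<le> exp ((\<alpha> + \<beta>)/4 * (u^2 + v^2))" by simp
  have "\<bar>Gf \<alpha> \<beta> \<phi> u v\<bar> = exp (\<beta>/4*(u^2+v^2) + \<alpha>/2*(u * v)) * \<bar>\<phi> ((u+v)/sqrt 2, (u-v)/sqrt 2)\<bar>"
    unfolding Gf_def by (simp add: abs_mult)
  also have "\<dots> \<le> exp ((\<alpha> + \<beta>)/4 * (u^2 + v^2)) * B"
    using e assms(2) by (intro mult_mono) auto
  finally show ?thesis by (simp add: mult.commute)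
qed

lemma rb_dom:
  assumes n: "0 < n" and k: "k \<le> n" and e: "0 \<le> \<epsilon>" and r: "1 - 2*\<epsilon> \<le> real n / (real n + 1)"
  shows "rb n k \<le> exp (1/2 - (1/2 - \<epsilon>) * (pg n k)^2)"
proof -
  let ?q = "pg n k"
  have d2: "(2 * real k - real n)^2 = ?q^2 * real n"
    unfolding pg_def using n by (simp add: power_divide)
  have np: "0 < real n + 1" by simp
  have "- ((2*real k - real n)^2 - 1) / (2*(real n + 1)) = - (?q^2) * (real n / (real n + 1)) / 2 + 1 / (2*(real n + 1))"
    unfolding d2 using np by (simp add: field_simps)
  also have "\<dots> \<le> - (?q^2) * (1 - 2*\<epsilon>) / 2 + 1/2"
  proof -
    have "- (?q^2) * (real n / (real n + 1)) \<le> - (?q^2) * (1 - 2*\<epsilon>)"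
      using r by (intro mult_left_mono_neg) auto
    then have "- (?q^2) * (real n / (real n + 1)) / 2 \<le> - (?q^2) * (1 - 2*\<epsilon>) / 2"
      by (rule divide_right_mono) simp
    moreover have "1 / (2*(real n + 1)) \<le> 1/2" using np by (simp add: divide_le_eq)
    ultimately show ?thesis by (rule add_mono)
  qed
  also have "\<dots> = 1/2 - (1/2 - \<epsilon>) * ?q^2" by (simp add: field_simps)
  finally have "- ((2*real k - real n)^2 - 1) / (2*(real n + 1)) \<le> 1/2 - (1/2 - \<epsilon>) * ?q^2" .
  then have "exp (- ((2*real k - real n)^2 - 1) / (2*(real n + 1))) \<le> exp (1/2 - (1/2 - \<epsilon>) * ?q^2)" by simp
  with rb_upper[OF k] show ?thesis by linarith
qed

lemma cell_sq:
  assumes "0 < n" "x \<in> cell n k"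
  shows "- ((pg n k)^2) \<le> - (x^2)/2 + 1"
proof -
  have "\<bar>pg n k - x\<bar> \<le> 1 / sqrt (real n)" by (rule cell_close[OF assms(2)])
  also have "\<dots> \<le> 1" using assms(1) by (simp add: divide_le_eq)
  finally have a: "\<bar>pg n k - x\<bar> \<le> 1" .
  have "x^2 \<le> 2 * (pg n k)^2 + 2 * (pg n k - x)^2"
  proof -
    have "0 \<le> (pg n k - 2*x + x)^2 - x^2 + x^2" by simp
    have "2 * (pg n k)^2 + 2 * (pg n k - x)^2 - x^2 = (2*pg n k - x)^2" by (simp add: power2_eq_square algebra_simps)
    then show ?thesis by (smt (verit) zero_le_power2)
  qed
  moreover have "(pg n k - x)^2 \<le> 1" using a by (simp add: abs_le_square_iff power_le_one abs_square_le_1)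
  ultimately show ?thesis by linarith
qed

lemma rb_nonneg: "0 \<le> rb n k" unfolding rb_def by simp

lemma Kc_ev: "\<forall>\<^sub>F n in sequentially. 0 < n \<and> 0 \<le> Kc n x \<and> Kc n x \<le> int n"
proof -
  have "\<forall>\<^sub>F n in sequentially. n \<ge> nat \<lceil>x^2\<rceil> + 1" by (rule eventually_ge_at_top)
  then show ?thesis
  proof eventually_elim
    case (elim n)
    then have n: "0 < n" by simp
    have "x^2 \<le> real n" using elim by linarith
    then have sx: "\<bar>x\<bar> \<le> sqrt (real n)" using real_sqrt_le_mono[of "x^2" "real n"] by simp
    have sn: "sqrt (real n) * sqrt (real n) = real n" by simp
    have "\<bar>x * sqrt (real n)\<bar> = \<bar>x\<bar> * sqrt (real n)" by (simp add: abs_mult)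
    then have "- (\<bar>x\<bar> * sqrt (real n)) \<le> x * sqrt (real n)" "x * sqrt (real n) \<le> \<bar>x\<bar> * sqrt (real n)"
      by linarith+
    moreover have "\<bar>x\<bar> * sqrt (real n) \<le> real n"
      using mult_right_mono[OF sx, of "sqrt (real n)"] sn by simp
    ultimately have a: "- real n \<le> x * sqrt (real n)" "x * sqrt (real n) \<le> real n" by linarith+
    have "0 \<le> Kc n x" unfolding Kc_def using a by simp
    moreover have "Kc n x \<le> int n" unfolding Kc_def using a by (simp add: floor_le_iff)
    ultimately show ?case using n by simp
  qed
qed

lemma cell_Kc:
  assumes "0 < n" "0 \<le> Kc n x"
  shows "x \<in> cell n (nat (Kc n x))"
  using assms by (simp add: cell_iff)


lemma hstep_dom:
  assumes a0: "0 \<le> \<alpha>" and ab: "\<alpha> + \<beta> < 2" and B: "\<And>z. \<bar>\<phi> z\<bar> \<le> B"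
  defines "\<epsilon> \<equiv> (1/2 - (\<alpha>+\<beta>)/4)/4"
  shows "\<forall>\<^sub>F n in sequentially. \<forall>x y. \<bar>hstep \<alpha> \<beta> \<phi> n (x,y)\<bar> \<le> B * exp (1 + 6*\<epsilon> - (3*\<epsilon>/2)*x^2 - (3*\<epsilon>/2)*y^2)"
proof -
  have e0: "0 < \<epsilon>" using ab by (simp add: \<epsilon>_def)
  have B0: "0 \<le> B" using B[of 0] by linarith
  have ev1: "\<forall>\<^sub>F n in sequentially. 1 - 2*\<epsilon> < real n / (real n + 1)"
    using order_tendstoD(1)[OF asym_limits(1), of "1 - 2*\<epsilon>"] e0 by simp
  have ev0: "\<forall>\<^sub>F n in sequentially. 0 < n" by (simp add: eventually_gt_at_top)
  show ?thesis using ev0 ev1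
  proof eventually_elim
    case (elim n)
    show ?case
    proof (intro allI)
      fix x y
      show "\<bar>hstep \<alpha> \<beta> \<phi> n (x,y)\<bar> \<le> B * exp (1 + 6*\<epsilon> - (3*\<epsilon>/2)*x^2 - (3*\<epsilon>/2)*y^2)"
      proof (cases "0 \<le> Kc n x \<and> Kc n x \<le> int n \<and> 0 \<le> Kc n y \<and> Kc n y \<le> int n")
        case False
        show ?thesis unfolding hstep_eval[OF elim(1)] if_not_P[OF False] using B0 by simp
      next
        case True
        define k where "k = nat (Kc n x)"
        define l where "l = nat (Kc n y)"
        have kn: "k \<le> n" "l \<le> n" unfolding k_def l_def using True by auto
        have cx: "x \<in> cell n k" "y \<in> cell n l" unfolding k_def l_def using True elim(1) by (auto intro: cell_Kc)
        let ?q = "pg n k" and ?r = "pg n l"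
        have r1: "rb n k \<le> exp (1/2 - (1/2 - \<epsilon>) * ?q^2)"
          by (rule rb_dom[OF elim(1) kn(1)]) (use e0 elim(2) in auto)
        have r2: "rb n l \<le> exp (1/2 - (1/2 - \<epsilon>) * ?r^2)"
          by (rule rb_dom[OF elim(1) kn(2)]) (use e0 elim(2) in auto)
        have g: "\<bar>Gf \<alpha> \<beta> \<phi> ?q ?r\<bar> \<le> B * exp ((\<alpha> + \<beta>)/4 * (?q^2 + ?r^2))"
          by (rule Gf_bound[OF a0 B])
        have "\<bar>hstep \<alpha> \<beta> \<phi> n (x,y)\<bar> = rb n k * rb n l * \<bar>Gf \<alpha> \<beta> \<phi> ?q ?r\<bar>"
          unfolding hstep_eval[OF elim(1)] using True
          by (simp add: k_def l_def abs_mult rb_nonneg)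
        also have "\<dots> \<le> exp (1/2 - (1/2 - \<epsilon>) * ?q^2) * exp (1/2 - (1/2 - \<epsilon>) * ?r^2) * (B * exp ((\<alpha> + \<beta>)/4 * (?q^2 + ?r^2)))"
          by (intro mult_mono r1 r2 g) (auto simp: rb_nonneg)
        also have "\<dots> = B * exp (1 - 3*\<epsilon>*?q^2 - 3*\<epsilon>*?r^2)"
        proof -
          have "(1/2 - (1/2 - \<epsilon>) * ?q^2) + (1/2 - (1/2 - \<epsilon>) * ?r^2) + (\<alpha> + \<beta>)/4 * (?q^2 + ?r^2)
              = 1 - 3*\<epsilon>*?q^2 - 3*\<epsilon>*?r^2"
            unfolding \<epsilon>_def by (simp add: field_simps)
          then show ?thesis by (simp add: exp_add[symmetric] mult_ac)
        qed
        also have "\<dots> \<le> B * exp (1 + 6*\<epsilon> - (3*\<epsilon>/2)*x^2 - (3*\<epsilon>/2)*y^2)"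
        proof -
          have a: "- (?q^2) \<le> - (x^2)/2 + 1" by (rule cell_sq[OF elim(1) cx(1)])
          have b: "- (?r^2) \<le> - (y^2)/2 + 1" by (rule cell_sq[OF elim(1) cx(2)])
          have "3*\<epsilon> * (- (?q^2)) \<le> 3*\<epsilon> * (- (x^2)/2 + 1)" using a e0 by (intro mult_left_mono) auto
          moreover have "3*\<epsilon> * (- (?r^2)) \<le> 3*\<epsilon> * (- (y^2)/2 + 1)" using b e0 by (intro mult_left_mono) auto
          ultimately have "1 - 3*\<epsilon>*?q^2 - 3*\<epsilon>*?r^2 \<le> 1 + 6*\<epsilon> - (3*\<epsilon>/2)*x^2 - (3*\<epsilon>/2)*y^2"
            by (simp add: algebra_simps)
          then show ?thesis using B0 by (intro mult_left_mono) auto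
        qed
        finally show ?thesis .
      qed
    qed
  qed
qed

lemma Gf_tendsto:
  assumes c: "continuous_on UNIV \<phi>" and u: "u \<longlonglongrightarrow> x" and v: "v \<longlonglongrightarrow> y"
  shows "(\<lambda>n. Gf \<alpha> \<beta> \<phi> (u n) (v n)) \<longlonglongrightarrow> Gf \<alpha> \<beta> \<phi> x y"
proof -
  have ic: "isCont \<phi> z" for z using c by (cases z) (simp add: continuous_on_eq_continuous_at)
  have t: "(\<lambda>n. ((u n + v n)/sqrt 2, (u n - v n)/sqrt 2)) \<longlonglongrightarrow> ((x + y)/sqrt 2, (x - y)/sqrt 2)"
    by (intro tendsto_intros u v) simp_all
  show ?thesis unfolding Gf_def
    by (intro tendsto_intros u v isCont_tendsto_compose[OF ic t])
qed

lemma hstep_lim: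
  assumes c: "continuous_on UNIV \<phi>"
  shows "(\<lambda>n. hstep \<alpha> \<beta> \<phi> n (x,y)) \<longlonglongrightarrow> exp (- (x^2)/2) * exp (- (y^2)/2) * Gf \<alpha> \<beta> \<phi> x y"
proof -
  define kx where "kx n = nat (Kc n x)" for n
  define ky where "ky n = nat (Kc n y)" for n
  have evx: "\<forall>\<^sub>F n in sequentially. kx n \<le> n \<and> x \<in> cell n (kx n)"
    using Kc_ev[of x] by eventually_elim (auto simp: kx_def intro: cell_Kc)
  have evy: "\<forall>\<^sub>F n in sequentially. ky n \<le> n \<and> y \<in> cell n (ky n)"
    using Kc_ev[of y] by eventually_elim (auto simp: ky_def intro: cell_Kc)
  have L: "(\<lambda>n. rb n (kx n) * rb n (ky n) * Gf \<alpha> \<beta> \<phi> (pg n (kx n)) (pg n (ky n)))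
      \<longlonglongrightarrow> exp (- (x^2)/2) * exp (- (y^2)/2) * Gf \<alpha> \<beta> \<phi> x y"
    by (intro tendsto_mult rb_limit evx evy Gf_tendsto[OF c] pg_limit)
      (use evx evy in \<open>eventually_elim, auto\<close>)+
  show ?thesis
  proof (rule Lim_transform_eventually[OF L])
    show "\<forall>\<^sub>F n in sequentially. rb n (kx n) * rb n (ky n) * Gf \<alpha> \<beta> \<phi> (pg n (kx n)) (pg n (ky n)) = hstep \<alpha> \<beta> \<phi> n (x, y)"
      using Kc_ev[of x] Kc_ev[of y] by eventually_elim (simp add: hstep_eval kx_def ky_def)
  qed
qed


lemma gauss1_nn:
  fixes a :: real assumes a: "0 < a"
  shows "(\<integral>\<^sup>+x. ennreal (exp (- a * x^2)) \<partial>lborel) = ennreal (sqrt (pi / a))"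
proof -
  define s where "s = sqrt (1 / (2*a))"
  have s0: "0 < s" unfolding s_def using a by simp
  have s2: "s^2 = 1/(2*a)" unfolding s_def using a by simp
  have e: "exp (- a * x^2) = sqrt (pi / a) * normal_density 0 s x" for x
  proof -
    have "2 * pi * s^2 = pi / a" using a unfolding s2 by (simp add: field_simps)
    moreover have "- ((x - 0)^2) / (2 * s^2) = - a * x^2" using a unfolding s2 by (simp add: field_simps)
    ultimately show ?thesis unfolding normal_density_def using a by (simp add: real_sqrt_divide)
  qed
  have "(\<integral>\<^sup>+x. ennreal (exp (- a * x^2)) \<partial>lborel) = (\<integral>\<^sup>+x. ennreal (sqrt (pi / a)) * ennreal (normal_density 0 s x) \<partial>lborel)"
    unfolding e using a by (intro nn_integral_cong, subst ennreal_mult) auto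
  also have "\<dots> = ennreal (sqrt (pi / a)) * (\<integral>\<^sup>+x. ennreal (normal_density 0 s x) \<partial>lborel)"
    by (rule nn_integral_cmult) simp
  also have "(\<integral>\<^sup>+x. ennreal (normal_density 0 s x) \<partial>lborel) = 1"
    by (subst nn_integral_eq_integral) (auto simp: integrable_normal_density[OF s0] integral_normal_density[OF s0])
  finally show ?thesis using a by simp
qed

lemma gauss2_nn:
  fixes a b :: real assumes a: "0 < a" and b: "0 < b"
  shows "(\<integral>\<^sup>+z. ennreal (exp (- a * (fst z)^2 - b * (snd z)^2)) \<partial>lborel) = ennreal (sqrt (pi / a) * sqrt (pi / b))"
proof -
  have m: "(\<lambda>z::real\<times>real. ennreal (exp (- a * (fst z)^2 - b * (snd z)^2))) \<in> borel_measurable (lborel \<Otimes>\<^sub>M lborel)"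
    by measurable
  have "(\<integral>\<^sup>+z. ennreal (exp (- a * (fst z)^2 - b * (snd z)^2)) \<partial>lborel)
      = (\<integral>\<^sup>+z. ennreal (exp (- a * (fst z)^2 - b * (snd z)^2)) \<partial>(lborel \<Otimes>\<^sub>M lborel))"
    by (simp add: lborel_prod)
  also have "\<dots> = (\<integral>\<^sup>+x. \<integral>\<^sup>+y. ennreal (exp (- a * x^2 - b * y^2)) \<partial>lborel \<partial>lborel)"
    using lborel.nn_integral_fst[OF m] by simp
  also have "\<dots> = (\<integral>\<^sup>+x. ennreal (exp (- a * x^2)) * ennreal (sqrt (pi / b)) \<partial>lborel)"
  proof (rule nn_integral_cong)
    fix x :: real
    have "(\<integral>\<^sup>+y. ennreal (exp (- a * x^2 - b * y^2)) \<partial>lborel) = (\<integral>\<^sup>+y. ennreal (exp (- a * x^2)) * ennreal (exp (- b * y^2)) \<partial>lborel)"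
      by (simp add: exp_diff ennreal_mult[symmetric] exp_minus field_simps)
    also have "\<dots> = ennreal (exp (- a * x^2)) * (\<integral>\<^sup>+y. ennreal (exp (- b * y^2)) \<partial>lborel)"
      by (rule nn_integral_cmult) simp
    finally show "(\<integral>\<^sup>+y. ennreal (exp (- a * x^2 - b * y^2)) \<partial>lborel) = ennreal (exp (- a * x^2)) * ennreal (sqrt (pi / b))"
      using gauss1_nn[OF b] by simp
  qed
  also have "\<dots> = (\<integral>\<^sup>+x. ennreal (exp (- a * x^2)) \<partial>lborel) * ennreal (sqrt (pi / b))"
    by (rule nn_integral_multc) simp
  also have "\<dots> = ennreal (sqrt (pi / a) * sqrt (pi / b))"
    using gauss1_nn[OF a] a b by (subst ennreal_mult) auto
  finally show ?thesis .
qed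

lemma gauss2_int:
  fixes a b :: real assumes a: "0 < a" and b: "0 < b"
  shows "has_bochner_integral lborel (\<lambda>z. exp (- a * (fst z)^2 - b * (snd z)^2)) (sqrt (pi / a) * sqrt (pi / b))"
proof (rule has_bochner_integral_nn_integral)
  show "(\<lambda>z::real\<times>real. exp (- a * (fst z)^2 - b * (snd z)^2)) \<in> borel_measurable lborel"
    unfolding measurable_lborel2 by (intro borel_measurable_continuous_onI continuous_intros)
qed (use gauss2_nn[OF a b] a b in auto)


lemma ennreal_inv_cancel:
  fixes c :: real assumes "c \<noteq> 0" and "A = ennreal \<bar>c\<bar> * B"
  shows "B = ennreal (1/\<bar>c\<bar>) * A"
proof -
  have "ennreal (1/\<bar>c\<bar>) * ennreal \<bar>c\<bar> = 1"
    using assms(1) by (subst ennreal_mult[symmetric]) auto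
  then show ?thesis using assms(2) by (simp add: mult.assoc[symmetric])
qed

lemma shear1:
  fixes g :: "real \<times> real \<Rightarrow> ennreal"
  assumes g: "g \<in> borel_measurable borel" and c: "c \<noteq> 0"
  shows "(\<integral>\<^sup>+z. g (c * fst z + t * snd z, snd z) \<partial>lborel) = ennreal (1/\<bar>c\<bar>) * (\<integral>\<^sup>+z. g z \<partial>lborel)"
proof -
  have g'[measurable]: "g \<in> borel_measurable (borel \<Otimes>\<^sub>M borel)" using g by (simp add: borel_prod)
  have m1: "(\<lambda>z::real\<times>real. g (c * fst z + t * snd z, snd z)) \<in> borel_measurable (lborel \<Otimes>\<^sub>M lborel)" by measurable
  have m2: "g \<in> borel_measurable (lborel \<Otimes>\<^sub>M lborel)" by measurable
  have inner: "(\<integral>\<^sup>+x. g (c * x + t * y, y) \<partial>lborel) = ennreal (1/\<bar>c\<bar>) * (\<integral>\<^sup>+x. g (x, y) \<partial>lborel)" for y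
  proof -
    have "(\<integral>\<^sup>+x. g (x, y) \<partial>lborel) = ennreal \<bar>c\<bar> * (\<integral>\<^sup>+x. g (t * y + c * x, y) \<partial>lborel)"
      by (rule nn_integral_real_affine[OF _ c]) measurable
    from ennreal_inv_cancel[OF c this] show ?thesis by (simp add: add.commute)
  qed
  have "(\<integral>\<^sup>+z. g (c * fst z + t * snd z, snd z) \<partial>lborel) = (\<integral>\<^sup>+z. g (c * fst z + t * snd z, snd z) \<partial>(lborel \<Otimes>\<^sub>M lborel))"
    by (simp add: lborel_prod)
  also have "\<dots> = (\<integral>\<^sup>+y. \<integral>\<^sup>+x. g (c * x + t * y, y) \<partial>lborel \<partial>lborel)"
    using lborel_pair.nn_integral_snd[OF m1] by simp
  also have "\<dots> = (\<integral>\<^sup>+y. ennreal (1/\<bar>c\<bar>) * (\<integral>\<^sup>+x. g (x, y) \<partial>lborel) \<partial>lborel)"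
    by (simp add: inner)
  also have "\<dots> = ennreal (1/\<bar>c\<bar>) * (\<integral>\<^sup>+y. \<integral>\<^sup>+x. g (x, y) \<partial>lborel \<partial>lborel)"
    by (rule nn_integral_cmult) measurable
  also have "(\<integral>\<^sup>+y. \<integral>\<^sup>+x. g (x, y) \<partial>lborel \<partial>lborel) = (\<integral>\<^sup>+z. g z \<partial>(lborel \<Otimes>\<^sub>M lborel))"
    using lborel_pair.nn_integral_snd[OF m2] by simp
  also have "\<dots> = (\<integral>\<^sup>+z. g z \<partial>lborel)" by (simp add: lborel_prod)
  finally show ?thesis .
qed

lemma shear2:
  fixes g :: "real \<times> real \<Rightarrow> ennreal"
  assumes g: "g \<in> borel_measurable borel" and c: "c \<noteq> 0"
  shows "(\<integral>\<^sup>+z. g (fst z, t * fst z + c * snd z) \<partial>lborel) = ennreal (1/\<bar>c\<bar>) * (\<integral>\<^sup>+z. g z \<partial>lborel)"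
proof -
  have g'[measurable]: "g \<in> borel_measurable (borel \<Otimes>\<^sub>M borel)" using g by (simp add: borel_prod)
  have m1: "(\<lambda>z::real\<times>real. g (fst z, t * fst z + c * snd z)) \<in> borel_measurable (lborel \<Otimes>\<^sub>M lborel)" by measurable
  have m2: "g \<in> borel_measurable (lborel \<Otimes>\<^sub>M lborel)" by measurable
  have inner: "(\<integral>\<^sup>+y. g (x, t * x + c * y) \<partial>lborel) = ennreal (1/\<bar>c\<bar>) * (\<integral>\<^sup>+y. g (x, y) \<partial>lborel)" for x
  proof -
    have "(\<integral>\<^sup>+y. g (x, y) \<partial>lborel) = ennreal \<bar>c\<bar> * (\<integral>\<^sup>+y. g (x, t * x + c * y) \<partial>lborel)"
      by (rule nn_integral_real_affine[OF _ c]) measurable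
    from ennreal_inv_cancel[OF c this] show ?thesis .
  qed
  have "(\<integral>\<^sup>+z. g (fst z, t * fst z + c * snd z) \<partial>lborel) = (\<integral>\<^sup>+z. g (fst z, t * fst z + c * snd z) \<partial>(lborel \<Otimes>\<^sub>M lborel))"
    by (simp add: lborel_prod)
  also have "\<dots> = (\<integral>\<^sup>+x. \<integral>\<^sup>+y. g (x, t * x + c * y) \<partial>lborel \<partial>lborel)"
    using lborel.nn_integral_fst[OF m1] by simp
  also have "\<dots> = (\<integral>\<^sup>+x. ennreal (1/\<bar>c\<bar>) * (\<integral>\<^sup>+y. g (x, y) \<partial>lborel) \<partial>lborel)"
    by (simp add: inner)
  also have "\<dots> = ennreal (1/\<bar>c\<bar>) * (\<integral>\<^sup>+x. \<integral>\<^sup>+y. g (x, y) \<partial>lborel \<partial>lborel)"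
    by (rule nn_integral_cmult) measurable
  also have "(\<integral>\<^sup>+x. \<integral>\<^sup>+y. g (x, y) \<partial>lborel \<partial>lborel) = (\<integral>\<^sup>+z. g z \<partial>(lborel \<Otimes>\<^sub>M lborel))"
    using lborel.nn_integral_fst[OF m2] by simp
  also have "\<dots> = (\<integral>\<^sup>+z. g z \<partial>lborel)" by (simp add: lborel_prod)
  finally show ?thesis .
qed

definition rotF :: "real \<times> real \<Rightarrow> real \<times> real" where
  "rotF z = ((fst z + snd z)/sqrt 2, (fst z - snd z)/sqrt 2)"

lemma rotF_measurable[measurable]: "rotF \<in> borel_measurable borel"
  unfolding rotF_def by (intro borel_measurable_continuous_onI continuous_intros) simp_all

lemma rot_nn:
  fixes g :: "real \<times> real \<Rightarrow> ennreal"
  assumes g[measurable]: "g \<in> borel_measurable borel"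
  shows "(\<integral>\<^sup>+z. g (rotF z) \<partial>lborel) = (\<integral>\<^sup>+z. g z \<partial>lborel)"
proof -
  define G where "G z = g (fst z, 1 * fst z + (- sqrt 2) * snd z)" for z
  have g'[measurable]: "g \<in> borel_measurable (borel \<Otimes>\<^sub>M borel)" using g by (simp add: borel_prod)
  have "G \<in> borel_measurable (borel \<Otimes>\<^sub>M borel)" unfolding G_def by measurable
  then have Gm[measurable]: "G \<in> borel_measurable borel" by (simp add: borel_prod)
  have s2: "sqrt 2 * sqrt 2 = (2::real)" by simp
  have e: "g (rotF z) = G (1/sqrt 2 * fst z + 1/sqrt 2 * snd z, snd z)" for z
  proof -
    have "(fst z + snd z) / sqrt 2 - sqrt 2 * snd z = (fst z - snd z) / sqrt 2"
      by (simp add: field_simps s2)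
    then show ?thesis unfolding G_def rotF_def by (simp add: add_divide_distrib)
  qed
  have "(\<integral>\<^sup>+z. g (rotF z) \<partial>lborel) = ennreal (1/\<bar>1/sqrt 2\<bar>) * (\<integral>\<^sup>+z. G z \<partial>lborel)"
    unfolding e by (rule shear1[OF Gm]) simp
  also have "(\<integral>\<^sup>+z. G z \<partial>lborel) = ennreal (1/\<bar>- sqrt 2\<bar>) * (\<integral>\<^sup>+z. g z \<partial>lborel)"
    unfolding G_def by (rule shear2[OF g]) simp
  also have "ennreal (1/\<bar>1/sqrt 2\<bar>) * (ennreal (1/\<bar>- sqrt 2\<bar>) * (\<integral>\<^sup>+z. g z \<partial>lborel)) = (\<integral>\<^sup>+z. g z \<partial>lborel)"
  proof -
    have "ennreal (1/\<bar>1/sqrt 2\<bar>) * ennreal (1/\<bar>- sqrt 2\<bar>) = 1"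
      by (subst ennreal_mult[symmetric]) auto
    then show ?thesis by (simp add: mult.assoc[symmetric])
  qed
  finally show ?thesis .
qed

lemma distr_rotF: "distr lborel borel rotF = (lborel :: (real \<times> real) measure)"
proof (rule measure_eqI)
  show "sets (distr lborel borel rotF) = sets (lborel :: (real \<times> real) measure)" by simp
  fix A :: "(real \<times> real) set" assume "A \<in> sets (distr lborel borel rotF)"
  then have A[measurable]: "A \<in> sets borel" by simp
  have "emeasure (distr lborel borel rotF) A = emeasure lborel (rotF -` A \<inter> space lborel)"
    by (rule emeasure_distr) auto
  also have "\<dots> = (\<integral>\<^sup>+z. indicator (rotF -` A \<inter> space lborel) z \<partial>lborel)"
    by (rule nn_integral_indicator[symmetric]) measurable
  also have "\<dots> = (\<integral>\<^sup>+z. indicator A (rotF z) \<partial>lborel)"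
    by (intro nn_integral_cong) (auto simp: indicator_def)
  also have "\<dots> = (\<integral>\<^sup>+z. indicator A z \<partial>lborel)"
    by (rule rot_nn) measurable
  also have "\<dots> = emeasure lborel A" by (rule nn_integral_indicator) simp
  finally show "emeasure (distr lborel borel rotF) A = emeasure lborel A" .
qed

lemma integral_rotF:
  fixes h :: "real \<times> real \<Rightarrow> real"
  assumes h[measurable]: "h \<in> borel_measurable borel"
  shows "integral\<^sup>L lborel (\<lambda>z. h (rotF z)) = integral\<^sup>L lborel h"
proof -
  have "integral\<^sup>L lborel h = integral\<^sup>L (distr lborel borel rotF) h" by (simp add: distr_rotF)
  also have "\<dots> = integral\<^sup>L lborel (\<lambda>z. h (rotF z))" by (rule integral_distr) simp_all
  finally show ?thesis ..
qed


definition rho :: "real \<Rightarrow> real \<Rightarrow> (real \<times> real \<Rightarrow> real) \<Rightarrow> real \<times> real \<Rightarrow> real" where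
  "rho \<alpha> \<beta> \<phi> z = exp (- ((fst z)^2)/2) * exp (- ((snd z)^2)/2) * Gf \<alpha> \<beta> \<phi> (fst z) (snd z)"

lemma cont_meas:
  fixes \<phi> :: "real \<times> real \<Rightarrow> real"
  assumes "continuous_on UNIV \<phi>"
  shows "\<phi> \<in> borel_measurable (borel \<Otimes>\<^sub>M borel)"
  using borel_measurable_continuous_onI[OF assms] by (simp add: borel_prod)

lemma rho_meas:
  assumes c: "continuous_on UNIV \<phi>"
  shows "rho \<alpha> \<beta> \<phi> \<in> borel_measurable lborel"
proof -
  have [measurable]: "\<phi> \<in> borel_measurable (borel \<Otimes>\<^sub>M borel)" by (rule cont_meas[OF c])
  have "rho \<alpha> \<beta> \<phi> \<in> borel_measurable (borel \<Otimes>\<^sub>M borel)"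
    unfolding rho_def[abs_def] Gf_def by measurable
  then show ?thesis by (simp add: borel_prod)
qed

lemma cell0: "cell 0 k = {}"
  unfolding cell_def by simp

lemma hstep_meas: "hstep \<alpha> \<beta> \<phi> n \<in> borel_measurable lborel"
proof (cases "n = 0")
  case True
  then have "hstep \<alpha> \<beta> \<phi> n = (\<lambda>z. 0)" unfolding hstep_def by (simp add: cell0)
  then show ?thesis by simp
next
  case False
  then show ?thesis using hstep_integral(1)[of n] by (simp add: borel_measurable_integrable)
qed

lemma hstep_conv:
  assumes a0: "0 \<le> \<alpha>" and ab: "\<alpha> + \<beta> < 2" and c: "continuous_on UNIV \<phi>" and B: "\<And>z. \<bar>\<phi> z\<bar> \<le> B"
  shows "(\<lambda>n. integral\<^sup>L lborel (hstep \<alpha> \<beta> \<phi> n)) \<longlonglongrightarrow> integral\<^sup>L lborel (rho \<alpha> \<beta> \<phi>)"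
proof -
  define \<epsilon> where "\<epsilon> = (1/2 - (\<alpha>+\<beta>)/4)/4"
  have e0: "0 < \<epsilon>" using ab by (simp add: \<epsilon>_def)
  define w where "w z = B * exp (1 + 6*\<epsilon>) * exp (- (3*\<epsilon>/2) * (fst z)^2 - (3*\<epsilon>/2) * (snd z)^2)" for z :: "real \<times> real"
  have gi: "integrable lborel (\<lambda>z::real\<times>real. exp (- (3*\<epsilon>/2) * (fst z)^2 - (3*\<epsilon>/2) * (snd z)^2))"
    using gauss2_int[of "3*\<epsilon>/2" "3*\<epsilon>/2"] e0 by (simp add: has_bochner_integral_iff)
  have wi: "integrable lborel w"
    unfolding w_def using gi by (intro integrable_mult_right)
  have dom: "\<forall>\<^sub>F n in sequentially. \<forall>x y. \<bar>hstep \<alpha> \<beta> \<phi> n (x,y)\<bar> \<le> B * exp (1 + 6*\<epsilon> - (3*\<epsilon>/2)*x^2 - (3*\<epsilon>/2)*y^2)"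
    unfolding \<epsilon>_def by (rule hstep_dom[OF a0 ab B])
  from dom obtain N where N: "\<And>n. N \<le> n \<Longrightarrow> \<forall>x y. \<bar>hstep \<alpha> \<beta> \<phi> n (x,y)\<bar> \<le> B * exp (1 + 6*\<epsilon> - (3*\<epsilon>/2)*x^2 - (3*\<epsilon>/2)*y^2)"
    by (auto simp: eventually_sequentially)
  have wz: "B * exp (1 + 6*\<epsilon> - (3*\<epsilon>/2)*x^2 - (3*\<epsilon>/2)*y^2) = w (x, y)" for x y
    unfolding w_def by (simp add: exp_add[symmetric] exp_diff algebra_simps)
  have "(\<lambda>n. integral\<^sup>L lborel (hstep \<alpha> \<beta> \<phi> (n + N))) \<longlonglongrightarrow> integral\<^sup>L lborel (rho \<alpha> \<beta> \<phi>)"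
  proof (rule integral_dominated_convergence[where w = w])
    show "rho \<alpha> \<beta> \<phi> \<in> borel_measurable lborel" by (rule rho_meas[OF c])
    show "hstep \<alpha> \<beta> \<phi> (n + N) \<in> borel_measurable lborel" for n by (rule hstep_meas)
    show "integrable lborel w" by (rule wi)
    show "AE z in lborel. (\<lambda>n. hstep \<alpha> \<beta> \<phi> (n + N) z) \<longlonglongrightarrow> rho \<alpha> \<beta> \<phi> z"
    proof (rule AE_I2)
      fix z :: "real \<times> real"
      obtain x y where z: "z = (x, y)" by fastforce
      have "(\<lambda>n. hstep \<alpha> \<beta> \<phi> n z) \<longlonglongrightarrow> rho \<alpha> \<beta> \<phi> z"
        unfolding z rho_def using hstep_lim[OF c] by simp
      then show "(\<lambda>n. hstep \<alpha> \<beta> \<phi> (n + N) z) \<longlonglongrightarrow> rho \<alpha> \<beta> \<phi> z"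
        by (rule LIMSEQ_ignore_initial_segment)
    qed
    show "AE z in lborel. norm (hstep \<alpha> \<beta> \<phi> (n + N) z) \<le> w z" for n
    proof (rule AE_I2)
      fix z :: "real \<times> real"
      obtain x y where z: "z = (x, y)" by fastforce
      show "norm (hstep \<alpha> \<beta> \<phi> (n + N) z) \<le> w z"
        using N[of "n + N"] wz[of x y] unfolding z by (metis le_add2 real_norm_def)
    qed
  qed
  then show ?thesis by (rule LIMSEQ_offset)
qed


definition psi :: "real \<Rightarrow> real \<Rightarrow> real \<times> real \<Rightarrow> real" where
  "psi a b w = exp (- a * (fst w)^2 - b * (snd w)^2)"

lemma psi_meas[measurable]: "psi a b \<in> borel_measurable borel"
  unfolding psi_def[abs_def] by (intro borel_measurable_continuous_onI continuous_intros)

lemma rho_rot: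
  "rho \<alpha> \<beta> \<phi> z = psi ((1 - (\<alpha>+\<beta>)/2)/2) ((1 - (\<beta>-\<alpha>)/2)/2) (rotF z) * \<phi> (rotF z)"
proof -
  obtain x y where z: "z = (x, y)" by fastforce
  have s: "(sqrt 2)^2 = (2::real)" by simp
  have "- (x^2)/2 + - (y^2)/2 + (\<beta>/4*(x^2+y^2) + \<alpha>/2*(x * y))
      = - ((1 - (\<alpha>+\<beta>)/2)/2) * ((x + y)/sqrt 2)^2 - ((1 - (\<beta>-\<alpha>)/2)/2) * ((x - y)/sqrt 2)^2"
    by (simp add: power_divide s power2_eq_square field_simps)
  then show ?thesis
    unfolding z rho_def Gf_def psi_def rotF_def
    by (simp add: exp_add[symmetric] mult.assoc[symmetric])
qed

lemma rho_integral:
  assumes c: "continuous_on UNIV \<phi>"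
  shows "integral\<^sup>L lborel (rho \<alpha> \<beta> \<phi>) = integral\<^sup>L lborel (\<lambda>w. psi ((1 - (\<alpha>+\<beta>)/2)/2) ((1 - (\<beta>-\<alpha>)/2)/2) w * \<phi> w)"
proof -
  have [measurable]: "\<phi> \<in> borel_measurable borel" by (rule borel_measurable_continuous_onI[OF c])
  have "integral\<^sup>L lborel (rho \<alpha> \<beta> \<phi>) = integral\<^sup>L lborel (\<lambda>z. (\<lambda>w. psi ((1 - (\<alpha>+\<beta>)/2)/2) ((1 - (\<beta>-\<alpha>)/2)/2) w * \<phi> w) (rotF z))"
  proof -
    have "rho \<alpha> \<beta> \<phi> = (\<lambda>z. (\<lambda>w. psi ((1 - (\<alpha>+\<beta>)/2)/2) ((1 - (\<beta>-\<alpha>)/2)/2) w * \<phi> w) (rotF z))"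
      by (rule ext) (simp add: rho_rot)
    then show ?thesis by simp
  qed
  also have "\<dots> = integral\<^sup>L lborel (\<lambda>w. psi ((1 - (\<alpha>+\<beta>)/2)/2) ((1 - (\<beta>-\<alpha>)/2)/2) w * \<phi> w)"
    by (rule integral_rotF) measurable
  finally show ?thesis .
qed

lemma psi_integral:
  assumes "0 < a" "0 < b"
  shows "integral\<^sup>L lborel (psi a b) = sqrt (pi / a) * sqrt (pi / b)"
  using gauss2_int[OF assms] unfolding psi_def[abs_def] by (simp add: has_bochner_integral_iff)

lemma gaussian2_eq:
  assumes a: "0 < a" and b: "0 < b"
  shows "gaussian2 (1 / (2*a)) 0 (1 / (2*b)) = density lborel (\<lambda>w. ennreal (psi a b w / (sqrt (pi / a) * sqrt (pi / b))))"
proof -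
  have "(\<lambda>(x, y). ennreal
       (1 / (2 * pi * sqrt (1 / (2*a) * (1 / (2*b)) - 0\<^sup>2)) *
        exp (- (1 / (2*b) * x\<^sup>2 - 2 * 0 * x * y + 1 / (2*a) * y\<^sup>2) / (2 * (1 / (2*a) * (1 / (2*b)) - 0\<^sup>2)))))
      = (\<lambda>w. ennreal (psi a b w / (sqrt (pi / a) * sqrt (pi / b))))"
  proof (rule ext, clarify)
    fix x y :: real
    have e1: "- (1 / (2*b) * x\<^sup>2 - 2 * 0 * x * y + 1 / (2*a) * y\<^sup>2) / (2 * (1 / (2*a) * (1 / (2*b)) - 0\<^sup>2))
        = - a * x^2 - b * y^2"
      using a b by (simp add: field_simps)
    have e2: "2 * pi * sqrt (1 / (2*a) * (1 / (2*b)) - 0\<^sup>2) = sqrt (pi / a) * sqrt (pi / b)"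
    proof -
      have "sqrt (pi / a) * sqrt (pi / b) = sqrt (pi^2 / (a*b))" using a b
        by (simp add: real_sqrt_mult[symmetric] power2_eq_square)
      also have "\<dots> = pi / sqrt (a * b)" using a b by (simp add: real_sqrt_divide)
      finally have X: "sqrt (pi / a) * sqrt (pi / b) = pi / sqrt (a * b)" .
      have "1 / (2*a) * (1 / (2*b)) - 0\<^sup>2 = 1 / (4 * (a*b))" by simp
      then have "sqrt (1 / (2*a) * (1 / (2*b)) - 0\<^sup>2) = 1 / (sqrt 4 * sqrt (a*b))"
        by (simp add: real_sqrt_divide real_sqrt_mult)
      also have "sqrt 4 = (2::real)" by (simp add: real_sqrt_eq_iff)
      finally have Y: "sqrt (1 / (2*a) * (1 / (2*b)) - 0\<^sup>2) = 1 / (2 * sqrt (a*b))" .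
      show ?thesis unfolding X Y by simp
    qed
    show "ennreal
       (1 / (2 * pi * sqrt (1 / (2*a) * (1 / (2*b)) - 0\<^sup>2)) *
        exp (- (1 / (2*b) * x\<^sup>2 - 2 * 0 * x * y + 1 / (2*a) * y\<^sup>2) / (2 * (1 / (2*a) * (1 / (2*b)) - 0\<^sup>2))))
      = ennreal (psi a b (x, y) / (sqrt (pi / a) * sqrt (pi / b)))"
      unfolding e1 e2 psi_def by simp
  qed
  then show ?thesis unfolding gaussian2_def by simp
qed

lemma gaussian2_integral:
  assumes a: "0 < a" and b: "0 < b" and c: "continuous_on UNIV f"
  shows "integral\<^sup>L (gaussian2 (1 / (2*a)) 0 (1 / (2*b))) f
       = integral\<^sup>L lborel (\<lambda>w. psi a b w * f w) / integral\<^sup>L lborel (psi a b)"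
proof -
  have [measurable]: "f \<in> borel_measurable borel" by (rule borel_measurable_continuous_onI[OF c])
  have "integral\<^sup>L (gaussian2 (1 / (2*a)) 0 (1 / (2*b))) f
      = integral\<^sup>L lborel (\<lambda>w. (psi a b w / (sqrt (pi / a) * sqrt (pi / b))) *\<^sub>R f w)"
    unfolding gaussian2_eq[OF a b]
  proof (rule integral_density)
    show "f \<in> borel_measurable lborel" by measurable
    show "(\<lambda>w. psi a b w / (sqrt (pi / a) * sqrt (pi / b))) \<in> borel_measurable lborel" by measurable
    show "AE w in lborel. 0 \<le> psi a b w / (sqrt (pi / a) * sqrt (pi / b))" using a b by (intro AE_I2 divide_nonneg_nonneg) (auto simp: psi_def)
  qed
  also have "\<dots> = integral\<^sup>L lborel (\<lambda>w. psi a b w * f w) / (sqrt (pi / a) * sqrt (pi / b))"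
    by (simp add: mult.commute[of _ "f _"] mult.assoc[symmetric] flip: integral_divide_zero)
  also have "\<dots> = integral\<^sup>L lborel (\<lambda>w. psi a b w * f w) / integral\<^sup>L lborel (psi a b)"
    by (simp add: psi_integral[OF a b])
  finally show ?thesis .
qed


theorem lemma3p1:
  fixes \<alpha> \<beta> :: real and S :: "nat \<Rightarrow> nat set"
  assumes "0 \<le> \<alpha>" and "\<alpha> < \<beta>" and "\<alpha> + \<beta> < 2"
    and "\<And>n. S n \<subseteq> {1..2 * n}" and "\<And>n. card (S n) = n"
  shows "conv_distr2 (\<lambda>n. gibbs_measure (2 * n) \<alpha> \<beta> (S n))
           (\<lambda>n \<sigma>. (w1 (2 * n) \<sigma>, w2 (2 * n) (S n) \<sigma>))
           (gaussian2 (1 / (1 - (\<alpha> + \<beta>) / 2)) 0 (1 / (1 - (\<beta> - \<alpha>) / 2)))"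
proof -
  define a1 where "a1 = (1 - (\<alpha>+\<beta>)/2)/2"
  define a2 where "a2 = (1 - (\<beta>-\<alpha>)/2)/2"
  have a1: "0 < a1" using assms(3) unfolding a1_def by simp
  have a2: "0 < a2" using assms(1,3) unfolding a2_def by simp
  have g: "gaussian2 (1 / (1 - (\<alpha> + \<beta>) / 2)) 0 (1 / (1 - (\<beta> - \<alpha>) / 2)) = gaussian2 (1 / (2*a1)) 0 (1 / (2*a2))"
  proof -
    have "2*a1 = 1 - (\<alpha>+\<beta>)/2" "2*a2 = 1 - (\<beta>-\<alpha>)/2" unfolding a1_def a2_def by simp_all
    then show ?thesis by simp
  qed
  show ?thesis unfolding conv_distr2_def g
  proof (intro allI impI)
    fix f :: "real \<times> real \<Rightarrow> real"
    assume f: "continuous_on UNIV f \<and> bounded (range f)"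
    then have fc: "continuous_on UNIV f" by blast
    from f obtain B where B: "\<And>z. \<bar>f z\<bar> \<le> B" unfolding bounded_iff by auto
    have c1: "continuous_on UNIV (\<lambda>_::real\<times>real. 1::real)" by simp
    have Lf: "(\<lambda>n. integral\<^sup>L lborel (hstep \<alpha> \<beta> f n)) \<longlonglongrightarrow> integral\<^sup>L lborel (rho \<alpha> \<beta> f)"
      by (rule hstep_conv[OF assms(1,3) fc B])
    have L1: "(\<lambda>n. integral\<^sup>L lborel (hstep \<alpha> \<beta> (\<lambda>_. 1) n)) \<longlonglongrightarrow> integral\<^sup>L lborel (rho \<alpha> \<beta> (\<lambda>_. 1))"
      by (rule hstep_conv[OF assms(1,3) c1, of 1]) simp
    have I1: "integral\<^sup>L lborel (rho \<alpha> \<beta> (\<lambda>_. 1)) = integral\<^sup>L lborel (psi a1 a2)"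
      using rho_integral[OF c1, of \<alpha> \<beta>] unfolding a1_def a2_def by simp
    have If: "integral\<^sup>L lborel (rho \<alpha> \<beta> f) = integral\<^sup>L lborel (\<lambda>w. psi a1 a2 w * f w)"
      using rho_integral[OF fc, of \<alpha> \<beta>] unfolding a1_def a2_def by simp
    have I1pos: "integral\<^sup>L lborel (psi a1 a2) \<noteq> 0"
      using psi_integral[OF a1 a2] a1 a2 by simp
    have L: "(\<lambda>n. integral\<^sup>L lborel (hstep \<alpha> \<beta> f n) / integral\<^sup>L lborel (hstep \<alpha> \<beta> (\<lambda>_. 1) n))
        \<longlonglongrightarrow> integral\<^sup>L lborel (\<lambda>w. psi a1 a2 w * f w) / integral\<^sup>L lborel (psi a1 a2)"
      using tendsto_divide[OF Lf L1] I1 If I1pos by simp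
    have ev: "\<forall>\<^sub>F n in sequentially. integral\<^sup>L lborel (hstep \<alpha> \<beta> f n) / integral\<^sup>L lborel (hstep \<alpha> \<beta> (\<lambda>_. 1) n)
        = integral\<^sup>L (gibbs_measure (2 * n) \<alpha> \<beta> (S n)) (\<lambda>\<sigma>. f (w1 (2 * n) \<sigma>, w2 (2 * n) (S n) \<sigma>))"
    proof -
      have "\<forall>\<^sub>F n in sequentially. 0 < n" by (simp add: eventually_gt_at_top)
      then show ?thesis
      proof eventually_elim
        case (elim n)
        have n0: "4 / real n \<noteq> 0" using elim by simp
        show ?case
          unfolding gibbs_integral[OF elim assms(4) assms(5)] hstep_integral(2)[OF elim]
          using n0 by simp
      qed
    qed
    have "(\<lambda>n. integral\<^sup>L (gibbs_measure (2 * n) \<alpha> \<beta> (S n)) (\<lambda>\<sigma>. f (w1 (2 * n) \<sigma>, w2 (2 * n) (S n) \<sigma>)))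
        \<longlonglongrightarrow> integral\<^sup>L lborel (\<lambda>w. psi a1 a2 w * f w) / integral\<^sup>L lborel (psi a1 a2)"
      by (rule Lim_transform_eventually[OF L ev])
    then show "(\<lambda>n. integral\<^sup>L (gibbs_measure (2 * n) \<alpha> \<beta> (S n)) (\<lambda>\<omega>. f (w1 (2 * n) \<omega>, w2 (2 * n) (S n) \<omega>)))
        \<longlonglongrightarrow> integral\<^sup>L (gaussian2 (1 / (2 * a1)) 0 (1 / (2 * a2))) f"
      unfolding gaussian2_integral[OF a1 a2 fc] .
  qed
qed


end
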